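(* Let $n\in\mathbb{N}$ and $0<\alpha<\beta\le n$. Let $Q$ be an open cube in $\mathbb{R}^n$ with center $x_0$ and let $f$ be a measurable function on $\mathbb{R}^n$ with $\operatorname{supp}f\subseteq2Q$. Then there exists $C=C(n,\alpha,\beta)>0$ such that \[ \int_Q|I_\alpha f|\,d\mathcal{H}^\beta_\infty\le C\,\ell(Q)^\alpha\int_{2Q}|f|\,d\mathcal{H}^\beta_\infty. \]
   Context: $\mathcal{H}^\beta_\infty(E)=\inf\{\sum_i\omega_\beta r_i^\beta:E\subset\bigcup_iB(x_i,r_i)\}$, $\omega_\beta=\pi^{\beta/2}/\Gamma(\beta/2+1)$; integrals against $\mathcal{H}^\beta_\infty$ are Choquet integrals $\int_\Omega h\,d\mathcal{H}^\beta_\infty=\int_0^\infty\mathcal{H}^\beta_\infty(\{x\in\Omega:h>s\})\,ds$. Cubes are axis-parallel, $\ell(Q)$ is the side length, $2Q$ is the concentric cube of side $2\ell(Q)$. $I_\alpha f(x)=\int_{\mathbb{R}^n}f(y)|x-y|^{\alpha-n}\,dy$. *)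

theory Defs
  imports "HOL-Analysis.Analysis"
begin

definition omega :: "real \<Rightarrow> real" where
  "omega \<beta> = pi powr (\<beta> / 2) / Gamma (\<beta> / 2 + 1)"

text \<open>Hausdorff content H^beta_infinity: infimum over countable covers by balls
  (radius 0 allowed, so finite covers are included).\<close>
definition hcontent :: "real \<Rightarrow> 'a::euclidean_space set \<Rightarrow> ennreal" where
  "hcontent \<beta> E = (INF cr \<in> {(c :: nat \<Rightarrow> 'a, r :: nat \<Rightarrow> real).
        (\<forall>i. 0 \<le> r i) \<and> E \<subseteq> (\<Union>i. ball (c i) (r i))}.
      (\<Sum>i. ennreal (omega \<beta> * snd cr i powr \<beta>)))"

definition choquet :: "real \<Rightarrow> 'a::euclidean_space set \<Rightarrow> ('a \<Rightarrow> real) \<Rightarrow> ennreal" where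
  "choquet \<beta> \<Omega> h = (\<integral>\<^sup>+ s \<in> {0..}. hcontent \<beta> {x \<in> \<Omega>. h x > s} \<partial>lborel)"

definition cube :: "'a::euclidean_space \<Rightarrow> real \<Rightarrow> 'a set" where
  "cube x0 l = {x. \<forall>i\<in>Basis. \<bar>(x - x0) \<bullet> i\<bar> < l / 2}"

definition riesz :: "real \<Rightarrow> ('a::euclidean_space \<Rightarrow> real) \<Rightarrow> 'a \<Rightarrow> real" where
  "riesz \<alpha> f x = (\<integral> y. f y * dist x y powr (\<alpha> - real DIM('a)) \<partial>lebesgue)"

end

theory Submission
  imports Defs
begin


lemma omega_pos: "0 < \<beta> \<Longrightarrow> 0 < omega \<beta>"
  unfolding omega_def by (simp add: Gamma_real_pos)

lemma hcontent_mono: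
  assumes "E \<subseteq> F" shows "hcontent \<beta> E \<le> hcontent \<beta> F"
  unfolding hcontent_def
  by (rule INF_superset_mono) (use assms in auto)

lemma hcontent_le_cover:
  assumes "\<And>i. 0 \<le> r i" "E \<subseteq> (\<Union>i. ball (c i) (r i))"
  shows "hcontent \<beta> E \<le> (\<Sum>i. ennreal (omega \<beta> * r i powr \<beta>))"
  unfolding hcontent_def
  by (rule INF_lower2[of "(c, r)"]) (use assms in auto)

lemma hcontent_ball:
  assumes "0 \<le> r" "0 < \<beta>" "E \<subseteq> ball c r"
  shows "hcontent \<beta> E \<le> ennreal (omega \<beta> * r powr \<beta>)"
proof -
  let ?r = "\<lambda>i::nat. if i = 0 then r else 0"
  have "hcontent \<beta> E \<le> (\<Sum>i. ennreal (omega \<beta> * ?r i powr \<beta>))"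
    by (rule hcontent_le_cover[of ?r _ "\<lambda>_. c"]) (use assms in auto)
  also have "(\<Sum>i. ennreal (omega \<beta> * ?r i powr \<beta>)) = (\<Sum>i\<in>{0}. ennreal (omega \<beta> * ?r i powr \<beta>))"
    by (rule suminf_finite) auto
  finally show ?thesis by simp
qed

lemma hcontent_empty: "0 < \<beta> \<Longrightarrow> hcontent \<beta> {} = 0"
  using hcontent_ball[of 0 \<beta> "{}" 0] by simp

lemma hcontent_near:
  assumes "hcontent \<beta> E < \<infinity>" "0 < e"
  obtains c r where "\<And>i. 0 \<le> r i" "E \<subseteq> (\<Union>i. ball (c i) (r i))"
    "(\<Sum>i. ennreal (omega \<beta> * r i powr \<beta>)) < hcontent \<beta> E + ennreal e"
proof -
  define a where "a = hcontent \<beta> E + ennreal e"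
  have "hcontent \<beta> E < a"
    using assms by (simp add: ennreal_add_left_cancel_less a_def)
  then have "\<exists>cr\<in>{(c, r). (\<forall>i. 0 \<le> r i) \<and> E \<subseteq> (\<Union>i. ball (c i) (r i))}.
      (\<Sum>i. ennreal (omega \<beta> * snd cr i powr \<beta>)) < a"
    by (simp only: hcontent_def INF_less_iff)
  then show ?thesis using that unfolding a_def by auto
qed



lemma hcontent_subadd:
  assumes "0 < \<beta>"
  shows "hcontent \<beta> (\<Union>i. E i) \<le> (\<Sum>i. hcontent \<beta> (E i))"
proof (rule ennreal_le_epsilon)
  fix e :: real assume fin: "(\<Sum>i. hcontent \<beta> (E i)) < top" and e: "0 < e"
  define S where "S i = {cr. (\<forall>j. 0 \<le> snd cr j) \<and> E i \<subseteq> (\<Union>j. ball (fst cr j) (snd cr j)) \<and>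
      (\<Sum>j. ennreal (omega \<beta> * snd cr j powr \<beta>)) < hcontent \<beta> (E i) + ennreal (e * (1/2)^Suc i)}" for i
  have "S i \<noteq> {}" for i
  proof -
    have "hcontent \<beta> (E i) \<le> (\<Sum>i. hcontent \<beta> (E i))"
      by (rule sum_le_suminf[of _ "{i}", simplified]) auto
    then have "hcontent \<beta> (E i) < \<infinity>"
      using fin by (simp add: le_less_trans)
    moreover have epos: "0 < e * (1/2)^Suc i" using e by simp
    ultimately obtain c r where "\<And>j. 0 \<le> r j" "E i \<subseteq> (\<Union>j. ball (c j) (r j))"
      "(\<Sum>j. ennreal (omega \<beta> * r j powr \<beta>)) < hcontent \<beta> (E i) + ennreal (e * (1/2)^Suc i)"
      by (rule hcontent_near) blast
    then have "(c, r) \<in> S i" unfolding S_def by simp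
    then show ?thesis by blast
  qed
  define CR where "CR i = (SOME cr. cr \<in> S i)" for i
  have CRS: "CR i \<in> S i" for i unfolding CR_def using \<open>S i \<noteq> {}\<close> by (simp add: some_in_eq)
  define c where "c k = fst (CR (fst (prod_decode k))) (snd (prod_decode k))" for k
  define r where "r k = snd (CR (fst (prod_decode k))) (snd (prod_decode k))" for k
  have "hcontent \<beta> (\<Union>i. E i) \<le> (\<Sum>k. ennreal (omega \<beta> * r k powr \<beta>))"
  proof (rule hcontent_le_cover)
    show "0 \<le> r k" for k using CRS unfolding r_def S_def by blast
    show "(\<Union>i. E i) \<subseteq> (\<Union>k. ball (c k) (r k))"
    proof
      fix x assume "x \<in> (\<Union>i. E i)"
      then obtain i where "x \<in> E i" by blast
      then obtain j where "x \<in> ball (fst (CR i) j) (snd (CR i) j)" using CRS[of i] unfolding S_def by blast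
      then show "x \<in> (\<Union>k. ball (c k) (r k))"
        by (intro UN_I[of "prod_encode (i, j)"]) (simp_all add: c_def r_def)
    qed
  qed
  also have "(\<Sum>k. ennreal (omega \<beta> * r k powr \<beta>)) = (\<Sum>i. (\<Sum>j. ennreal (omega \<beta> * snd (CR i) j powr \<beta>)))"
    unfolding r_def
    using suminf_ennreal_2dimen[where f = "\<lambda>p. ennreal (omega \<beta> * snd (CR (fst p)) (snd p) powr \<beta>)"
       and g = "\<lambda>i. (\<Sum>j. ennreal (omega \<beta> * snd (CR i) j powr \<beta>))"] by simp
  also have "\<dots> \<le> (\<Sum>i. hcontent \<beta> (E i) + ennreal (e * (1/2)^Suc i))"
    by (intro suminf_le) (use CRS in \<open>auto simp: S_def less_imp_le\<close>)
  also have "\<dots> = (\<Sum>i. hcontent \<beta> (E i)) + (\<Sum>i. ennreal (e * (1/2)^Suc i))"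
    by (rule suminf_add[symmetric]) auto
  also have "(\<Sum>i. ennreal (e * (1/2)^Suc i)) = ennreal e"
    using sums_mult[OF power_half_series, of e] e by (intro suminf_ennreal_eq) auto
  finally show "hcontent \<beta> (\<Union>i. E i) \<le> (\<Sum>i. hcontent \<beta> (E i)) + ennreal e" .
qed

lemma hcontent_subadd_countable:
  assumes "0 < \<beta>" "countable I"
  shows "hcontent \<beta> (\<Union>i\<in>I. E i) \<le> (\<integral>\<^sup>+ i. hcontent \<beta> (E i) \<partial>count_space I)"
proof -
  define F where "F p = (if p \<in> to_nat_on I ` I then E (from_nat_into I p) else {})" for p
  have "(\<Union>i\<in>I. E i) \<subseteq> (\<Union>p. F p)"
  proof
    fix x assume "x \<in> (\<Union>i\<in>I. E i)"
    then obtain i where i: "i \<in> I" "x \<in> E i" by blast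
    then have "x \<in> F (to_nat_on I i)" using assms(2) by (simp add: F_def)
    then show "x \<in> (\<Union>p. F p)" by blast
  qed
  then have "hcontent \<beta> (\<Union>i\<in>I. E i) \<le> (\<Sum>p. hcontent \<beta> (F p))"
    using hcontent_subadd[OF assms(1)] hcontent_mono order_trans by blast
  also have "\<dots> = (\<integral>\<^sup>+ p. hcontent \<beta> (F p) \<partial>count_space UNIV)"
    by (simp add: nn_integral_count_space_nat)
  also have "\<dots> = (\<integral>\<^sup>+ p. hcontent \<beta> (F p) * indicator (to_nat_on I ` I) p \<partial>count_space UNIV)"
    by (intro nn_integral_cong) (simp add: F_def hcontent_empty assms(1) indicator_def)
  also have "\<dots> = (\<integral>\<^sup>+ p. hcontent \<beta> (F p) \<partial>count_space (to_nat_on I ` I))"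
    by (simp add: nn_integral_count_space_indicator)
  also have "\<dots> = (\<integral>\<^sup>+ i. hcontent \<beta> (F (to_nat_on I i)) \<partial>count_space I)"
    by (rule nn_integral_bij_count_space[symmetric]) (use assms(2) in \<open>simp add: bij_betw_def inj_on_to_nat_on\<close>)
  also have "\<dots> = (\<integral>\<^sup>+ i. hcontent \<beta> (E i) \<partial>count_space I)"
    by (intro nn_integral_cong) (use assms(2) in \<open>simp add: F_def\<close>)
  finally show ?thesis .
qed


definition sk :: "real \<Rightarrow> nat \<Rightarrow> real" where "sk L k = L / 2 ^ k"

definition idx :: "real \<Rightarrow> nat \<Rightarrow> 'a::euclidean_space \<Rightarrow> ('a \<Rightarrow> int)" where
  "idx L k x = (\<lambda>i\<in>Basis. \<lfloor>(x \<bullet> i) / sk L k\<rfloor>)"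

definition rep :: "real \<Rightarrow> nat \<Rightarrow> ('a::euclidean_space \<Rightarrow> int) \<Rightarrow> 'a" where
  "rep L k z = (\<Sum>i\<in>Basis. (of_int (z i) * sk L k) *\<^sub>R i)"

lemma sk_pos: "0 < L \<Longrightarrow> 0 < sk L k"
  by (simp add: sk_def)

lemma idx_PiE: "idx L k x \<in> PiE Basis (\<lambda>_. UNIV)"
  by (simp add: idx_def)

lemma rep_inner: "i \<in> Basis \<Longrightarrow> rep L k z \<bullet> i = of_int (z i) * sk L k"
  by (simp add: rep_def inner_sum_left inner_Basis if_distrib cong: if_cong)

lemma idx_rep:
  assumes "0 < L" "z \<in> PiE Basis (\<lambda>_. UNIV)"
  shows "idx L k (rep L k z) = z"
proof
  fix i show "idx L k (rep L k z) i = z i"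
  proof (cases "i \<in> Basis")
    case True
    then show ?thesis using sk_pos[OF assms(1), of k] by (simp add: idx_def rep_inner)
  next
    case False
    then show ?thesis using assms(2) by (simp add: idx_def PiE_def extensional_def)
  qed
qed

lemma floor_nest:
  assumes "0 < L" "k' \<le> k"
  shows "\<lfloor>t / sk L k'\<rfloor> = \<lfloor>t / sk L k\<rfloor> div 2 ^ (k - k')"
proof -
  have e: "(2::real)^k = 2^(k-k') * 2^k'" using assms(2) by (simp add: power_add[symmetric])
  have "t / sk L k' = (t / sk L k) / real_of_int (2 ^ (k - k'))"
    using assms(1) unfolding of_int_power of_int_numeral sk_def e by (simp add: field_simps)
  then have "\<lfloor>t / sk L k'\<rfloor> = \<lfloor>(t / sk L k) / real_of_int (2 ^ (k - k'))\<rfloor>" by (rule arg_cong)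
  also have "\<dots> = \<lfloor>t / sk L k\<rfloor> div 2 ^ (k - k')" by (rule floor_divide_real_eq_div) simp
  finally show ?thesis .
qed

lemma idx_nest:
  assumes "0 < L" "k' \<le> k" "idx L k x = idx L k y"
  shows "idx L k' x = idx L k' y"
proof
  fix i show "idx L k' x i = idx L k' y i"
  proof (cases "i \<in> Basis")
    case True
    then have "\<lfloor>(x \<bullet> i) / sk L k\<rfloor> = \<lfloor>(y \<bullet> i) / sk L k\<rfloor>"
      using assms(3) unfolding idx_def by (metis restrict_apply')
    then show ?thesis using True by (simp add: idx_def floor_nest[OF assms(1,2)])
  qed (simp add: idx_def)
qed

lemma cube_sub_ball:
  assumes "0 < L"
  shows "{x::'a::euclidean_space. idx L k x = z} \<subseteq> ball (rep L k z) (real DIM('a) * sk L k)"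
proof
  fix x :: 'a assume "x \<in> {x. idx L k x = z}"
  then have z: "z = idx L k x" by simp
  have s: "0 < sk L k" using sk_pos[OF assms] .
  have "\<bar>(x - rep L k z) \<bullet> i\<bar> < sk L k" if "i \<in> Basis" for i
  proof -
    have "(x - rep L k z) \<bullet> i = x \<bullet> i - of_int \<lfloor>(x \<bullet> i) / sk L k\<rfloor> * sk L k"
      using that by (simp add: inner_diff_left rep_inner z idx_def)
    moreover have "of_int \<lfloor>(x \<bullet> i) / sk L k\<rfloor> * sk L k \<le> x \<bullet> i"
      using s by (metis floor_divide_lower)
    moreover have "x \<bullet> i < (of_int \<lfloor>(x \<bullet> i) / sk L k\<rfloor> + 1) * sk L k"
      using s by (metis floor_divide_upper)
    ultimately show ?thesis by (simp add: algebra_simps)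
  qed
  then have "(\<Sum>i\<in>Basis. \<bar>(x - rep L k z) \<bullet> i\<bar>) < (\<Sum>i\<in>(Basis::'a set). sk L k)"
    by (intro sum_strict_mono) auto
  then have "norm (x - rep L k z) < real DIM('a) * sk L k"
    using norm_le_l1[of "x - rep L k z"] by simp
  then show "x \<in> ball (rep L k z) (real DIM('a) * sk L k)"
    by (simp add: dist_norm norm_minus_commute)
qed

lemma hcontent_cube:
  assumes "0 < L" "0 < \<beta>"
  shows "hcontent \<beta> {x::'a::euclidean_space. idx L k x = z}
    \<le> ennreal (omega \<beta> * real DIM('a) powr \<beta>) * ennreal (sk L k powr \<beta>)"
proof -
  have "hcontent \<beta> {x::'a::euclidean_space. idx L k x = z} \<le> ennreal (omega \<beta> * (real DIM('a) * sk L k) powr \<beta>)"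
    by (rule hcontent_ball[OF _ assms(2) cube_sub_ball[OF assms(1)]]) (use sk_pos[OF assms(1), of k] in \<open>intro mult_nonneg_nonneg, auto\<close>)
  also have "\<dots> = ennreal (omega \<beta> * real DIM('a) powr \<beta>) * ennreal (sk L k powr \<beta>)"
    using sk_pos[OF assms(1), of k] omega_pos[OF assms(2)]
    by (simp add: powr_mult ennreal_mult[symmetric] mult.assoc)
  finally show ?thesis .
qed



lemma interval_measure_le:
  "emeasure lborel {s::real. 0 \<le> s \<and> a \<le> ennreal s \<and> ennreal s < a + c} \<le> c"
proof (cases "a = top \<or> c = top")
  case True
  then show ?thesis
  proof
    assume "a = top"
    then have "{s::real. 0 \<le> s \<and> a \<le> ennreal s \<and> ennreal s < a + c} = {}"
      by (simp add: top_unique)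
    then show ?thesis by (simp del: Collect_empty_eq)
  qed simp
next
  case False
  then obtain a' c' where fin: "a = ennreal a'" "0 \<le> a'" "c = ennreal c'" "0 \<le> c'"
    by (metis ennreal_cases)
  have "{s::real. 0 \<le> s \<and> a \<le> ennreal s \<and> ennreal s < a + c} \<subseteq> {a'..a'+c'}"
  proof
    fix s assume s: "s \<in> {s::real. 0 \<le> s \<and> a \<le> ennreal s \<and> ennreal s < a + c}"
    then have s0: "0 \<le> s" by simp
    have "ennreal a' \<le> ennreal s" using s fin by simp
    then have "a' \<le> s" using s0 by (simp only: ennreal_le_iff)
    have "ennreal s < ennreal (a' + c')" using s fin by (simp only: ennreal_plus mem_Collect_eq)
    then have "s < a' + c'" using fin s0 by (subst (asm) ennreal_less_iff) simp_all
    then show "s \<in> {a'..a'+c'}" using \<open>a' \<le> s\<close> by simp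
  qed
  then have "emeasure lborel {s::real. 0 \<le> s \<and> a \<le> ennreal s \<and> ennreal s < a + c} \<le> emeasure lborel {a'..a'+c'}"
    by (intro emeasure_mono) auto
  also have "\<dots> = c" using fin by simp
  finally show ?thesis .
qed


lemma measurable_interval_ennreal:
  "{s::real. 0 \<le> s \<and> a \<le> ennreal s \<and> ennreal s < b} \<in> sets borel"
proof -
  have eq: "{s::real. 0 \<le> s \<and> a \<le> ennreal s \<and> ennreal s < b} = {0..} \<inter> (ennreal -` ({a..} \<inter> {..<b}) \<inter> space borel)"
    by auto
  have "ennreal -` ({a..} \<inter> {..<b}) \<inter> space borel \<in> sets borel"
    by (rule measurable_sets[OF measurable_ennreal]) (intro sets.Int borel_closed borel_open closed_atLeast open_lessThan)
  then show ?thesis unfolding eq by (intro sets.Int) auto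
qed

lemma KL:
  fixes \<Omega> :: "'a::euclidean_space set" and h :: "'a \<Rightarrow> real"
    and b :: "nat \<Rightarrow> ennreal" and kk :: "nat \<Rightarrow> nat" and Z :: "nat \<Rightarrow> ('a \<Rightarrow> int) set"
  assumes L: "0 < L" and \<beta>: "0 < \<beta>" and Zfin: "\<And>j. finite (Z j)"
    and ZP: "\<And>j. Z j \<subseteq> PiE Basis (\<lambda>_. UNIV)"
    and hb: "\<And>x. x \<in> \<Omega> \<Longrightarrow> ennreal (h x) \<le> (\<Sum>j. b j * indicator (Z j) (idx L (kk j) x))"
  shows "choquet \<beta> \<Omega> h \<le> ennreal (omega \<beta> * real DIM('a) powr \<beta>) *
           (\<Sum>j. b j * of_nat (card (Z j)) * ennreal (sk L (kk j) powr \<beta>))"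
proof -
  define c where "c = ennreal (omega \<beta> * real DIM('a) powr \<beta>)"
  define G where "G x k = (\<Sum>j. b j * of_bool (kk j \<le> k \<and> idx L (kk j) x \<in> Z j))" for x :: 'a and k
  define Dl where "Dl x k = (\<Sum>j. b j * of_bool (kk j = k \<and> idx L (kk j) x \<in> Z j))" for x :: 'a and k
  define P where "P x k = (if k = 0 then 0 else G x (k - 1))" for x :: 'a and k
  have GPD: "G x k = P x k + Dl x k" for x k
  proof (cases k)
    case 0
    then show ?thesis unfolding G_def P_def Dl_def by simp
  next
    case (Suc m)
    have "G x k = (\<Sum>j. b j * of_bool (kk j \<le> m \<and> idx L (kk j) x \<in> Z j) + b j * of_bool (kk j = Suc m \<and> idx L (kk j) x \<in> Z j))"
      unfolding G_def Suc
    proof (intro suminf_cong)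
      fix j
      show "b j * of_bool (kk j \<le> Suc m \<and> idx L (kk j) x \<in> Z j) =
        b j * of_bool (kk j \<le> m \<and> idx L (kk j) x \<in> Z j) + b j * of_bool (kk j = Suc m \<and> idx L (kk j) x \<in> Z j)"
        by (cases "kk j \<le> m"; cases "kk j = Suc m") auto
    qed
    also have "\<dots> = G x m + Dl x k"
      unfolding G_def Dl_def Suc by (rule suminf_add[symmetric]) auto
    finally show ?thesis by (simp add: P_def Suc)
  qed
  have Geq: "G x k' = G y k'" if "idx L k x = idx L k y" "k' \<le> k" for x y k k'
    unfolding G_def
  proof (intro suminf_cong)
    fix j
    have "kk j \<le> k' \<Longrightarrow> idx L (kk j) x = idx L (kk j) y"
      using idx_nest[OF L _ that(1)] that(2) by simp
    then show "b j * of_bool (kk j \<le> k' \<and> idx L (kk j) x \<in> Z j) = b j * of_bool (kk j \<le> k' \<and> idx L (kk j) y \<in> Z j)"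
      by auto
  qed
  define D where "D = (UNIV::nat set) \<times> PiE (Basis::'a set) (\<lambda>_. UNIV::int set)"
  have cD: "countable D" unfolding D_def
    by (intro countable_SIGMA countable_PiE) auto
  define Gz where "Gz d = G (rep L (fst d) (snd d)) (fst d)" for d
  define Pz where "Pz d = P (rep L (fst d) (snd d)) (fst d)" for d
  define Dz where "Dz d = Dl (rep L (fst d) (snd d)) (fst d)" for d
  define M where "M s = {d\<in>D. Pz d \<le> ennreal s \<and> ennreal s < Gz d}" for s
  define cube where "cube d = {x::'a. idx L (fst d) x = snd d}" for d
  have lev: "{x\<in>\<Omega>. h x > s} \<subseteq> (\<Union>d\<in>M s. cube d)" if s0: "0 \<le> s" for s
  proof
    fix x assume "x \<in> {x\<in>\<Omega>. h x > s}"
    then have x: "x \<in> \<Omega>" "s < h x" by auto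
    then have "ennreal s < ennreal (h x)" using s0 by (simp add: ennreal_lessI)
    also have "\<dots> \<le> (\<Sum>j. b j * indicator (Z j) (idx L (kk j) x))" using hb[OF x(1)] .
    also have "\<dots> = (SUP N. \<Sum>j<N. b j * indicator (Z j) (idx L (kk j) x))" by (rule suminf_eq_SUP)
    finally obtain N where N: "ennreal s < (\<Sum>j<N. b j * indicator (Z j) (idx L (kk j) x))"
      by (auto simp: less_SUP_iff)
    define K where "K = (\<Sum>j<N. kk j)"
    have "(\<Sum>j<N. b j * indicator (Z j) (idx L (kk j) x)) \<le> (\<Sum>j<N. b j * of_bool (kk j \<le> K \<and> idx L (kk j) x \<in> Z j))"
    proof (intro sum_mono)
      fix j assume "j \<in> {..<N}"
      then have "kk j \<le> K" unfolding K_def by (intro member_le_sum) auto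
      then show "b j * indicator (Z j) (idx L (kk j) x) \<le> b j * of_bool (kk j \<le> K \<and> idx L (kk j) x \<in> Z j)"
        by (simp add: indicator_def)
    qed
    also have "\<dots> \<le> G x K" unfolding G_def by (rule sum_le_suminf) auto
    finally have "\<exists>k. ennreal s < G x k" using N by (meson less_le_trans)
    define k0 where "k0 = (LEAST k. ennreal s < G x k)"
    have k0: "ennreal s < G x k0" unfolding k0_def using \<open>\<exists>k. ennreal s < G x k\<close> by (rule LeastI_ex)
    define z0 where "z0 = idx L k0 x"
    have d0: "(k0, z0) \<in> D" unfolding D_def z0_def by (simp add: idx_PiE)
    have rz: "idx L k0 (rep L k0 z0) = idx L k0 x"
      using idx_rep[OF L] d0 unfolding D_def z0_def by auto
    have "Gz (k0, z0) = G x k0" unfolding Gz_def using Geq[OF rz] by simp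
    moreover have "Pz (k0, z0) \<le> ennreal s"
    proof (cases k0)
      case 0 then show ?thesis by (simp add: Pz_def P_def)
    next
      case (Suc m)
      have "\<not> ennreal s < G x m" unfolding k0_def
        using not_less_Least[of m "\<lambda>k. ennreal s < G x k"] Suc k0_def by auto
      moreover have "P (rep L k0 z0) k0 = G x m" using Geq[OF rz, of m] Suc by (simp add: P_def)
      ultimately show ?thesis by (simp add: Pz_def not_less)
    qed
    ultimately have "(k0, z0) \<in> M s" using k0 d0 by (simp add: M_def)
    moreover have "x \<in> cube (k0, z0)" by (simp add: cube_def z0_def)
    ultimately show "x \<in> (\<Union>d\<in>M s. cube d)" by blast
  qed
  have Hlev: "hcontent \<beta> {x\<in>\<Omega>. h x > s} \<le> (\<integral>\<^sup>+ d. c * ennreal (sk L (fst d) powr \<beta>) * indicator (M s) d \<partial>count_space D)"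
    if s0: "0 \<le> s" for s
  proof -
    have MD: "M s \<subseteq> D" by (auto simp: M_def)
    have "hcontent \<beta> {x\<in>\<Omega>. h x > s} \<le> hcontent \<beta> (\<Union>d\<in>M s. cube d)"
      by (rule hcontent_mono[OF lev[OF s0]])
    also have "\<dots> \<le> (\<integral>\<^sup>+ d. hcontent \<beta> (cube d) \<partial>count_space (M s))"
      by (rule hcontent_subadd_countable[OF \<beta>]) (use countable_subset[OF MD cD] in simp)
    also have "\<dots> \<le> (\<integral>\<^sup>+ d. c * ennreal (sk L (fst d) powr \<beta>) \<partial>count_space (M s))"
      by (intro nn_integral_mono) (simp add: cube_def c_def hcontent_cube[OF L \<beta>])
    also have "\<dots> = (\<integral>\<^sup>+ d. c * ennreal (sk L (fst d) powr \<beta>) * indicator (M s) d \<partial>count_space UNIV)"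
      by (rule nn_integral_count_space_indicator) simp
    also have "\<dots> = (\<integral>\<^sup>+ d. c * ennreal (sk L (fst d) powr \<beta>) * indicator (M s) d * indicator D d \<partial>count_space UNIV)"
      by (intro nn_integral_cong) (use MD in \<open>auto simp: indicator_def\<close>)
    also have "\<dots> = (\<integral>\<^sup>+ d. c * ennreal (sk L (fst d) powr \<beta>) * indicator (M s) d \<partial>count_space D)"
      by (rule nn_integral_count_space_indicator[symmetric]) simp
    finally show ?thesis .
  qed
  define I where "I d = {s::real. 0 \<le> s \<and> Pz d \<le> ennreal s \<and> ennreal s < Gz d}" for d
  have Imeas: "I d \<in> sets borel" for d unfolding I_def by (rule measurable_interval_ennreal)
  have "choquet \<beta> \<Omega> h \<le> (\<integral>\<^sup>+ s. (\<integral>\<^sup>+ d. c * ennreal (sk L (fst d) powr \<beta>) * indicator (M s) d \<partial>count_space D) * indicator {0..} s \<partial>lborel)"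
    unfolding choquet_def
  proof (intro nn_integral_mono)
    fix s :: real
    show "hcontent \<beta> {x\<in>\<Omega>. h x > s} * indicator {0..} s \<le>
      (\<integral>\<^sup>+ d. c * ennreal (sk L (fst d) powr \<beta>) * indicator (M s) d \<partial>count_space D) * indicator {0..} s"
      using Hlev[of s] by (cases "0 \<le> s") auto
  qed
  also have "\<dots> = (\<integral>\<^sup>+ s. (\<integral>\<^sup>+ d. c * ennreal (sk L (fst d) powr \<beta>) * indicator (I d) s \<partial>count_space D) \<partial>lborel)"
  proof (intro nn_integral_cong)
    fix s :: real
    have "(\<integral>\<^sup>+ d. c * ennreal (sk L (fst d) powr \<beta>) * indicator (M s) d \<partial>count_space D) * indicator {0..} s
        = (\<integral>\<^sup>+ d. c * ennreal (sk L (fst d) powr \<beta>) * indicator (M s) d * indicator {0..} s \<partial>count_space D)"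
      by (rule nn_integral_multc[symmetric]) simp
    also have "\<dots> = (\<integral>\<^sup>+ d. c * ennreal (sk L (fst d) powr \<beta>) * indicator (I d) s \<partial>count_space D)"
      by (intro nn_integral_cong) (auto simp: indicator_def M_def I_def)
    finally show "(\<integral>\<^sup>+ d. c * ennreal (sk L (fst d) powr \<beta>) * indicator (M s) d \<partial>count_space D) * indicator {0..} s
        = (\<integral>\<^sup>+ d. c * ennreal (sk L (fst d) powr \<beta>) * indicator (I d) s \<partial>count_space D)" .
  qed
  also have "\<dots> = (\<integral>\<^sup>+ d. (\<integral>\<^sup>+ s. c * ennreal (sk L (fst d) powr \<beta>) * indicator (I d) s \<partial>lborel) \<partial>count_space D)"
    by (rule nn_integral_count_space_nn_integral[OF cD]) (use Imeas in simp)
  also have "\<dots> = (\<integral>\<^sup>+ d. c * ennreal (sk L (fst d) powr \<beta>) * emeasure lborel (I d) \<partial>count_space D)"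
    by (intro nn_integral_cong nn_integral_cmult_indicator) (use Imeas in simp)
  also have "\<dots> \<le> (\<integral>\<^sup>+ d. c * ennreal (sk L (fst d) powr \<beta>) * Dz d \<partial>count_space D)"
  proof (intro nn_integral_mono mult_left_mono)
    fix d
    show "emeasure lborel (I d) \<le> Dz d"
      unfolding I_def Gz_def Pz_def Dz_def GPD by (rule interval_measure_le)
  qed simp
  also have "\<dots> = (\<integral>\<^sup>+ d. (\<Sum>j. c * b j * ennreal (sk L (kk j) powr \<beta>) * indicator ({kk j} \<times> Z j) d) \<partial>count_space D)"
  proof (intro nn_integral_cong)
    fix d assume "d \<in> space (count_space D)"
    then have dD: "d \<in> D" by simp
    have "Dz d = (\<Sum>j. b j * indicator ({kk j} \<times> Z j) d)"
      unfolding Dz_def Dl_def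
    proof (intro suminf_cong)
      fix j
      have "kk j = fst d \<Longrightarrow> idx L (kk j) (rep L (fst d) (snd d)) = snd d"
        using idx_rep[OF L] dD by (auto simp: D_def)
      then show "b j * of_bool (kk j = fst d \<and> idx L (kk j) (rep L (fst d) (snd d)) \<in> Z j) = b j * indicator ({kk j} \<times> Z j) d"
        by (cases d) (auto simp: indicator_def)
    qed
    then have "c * ennreal (sk L (fst d) powr \<beta>) * Dz d = (\<Sum>j. c * ennreal (sk L (fst d) powr \<beta>) * (b j * indicator ({kk j} \<times> Z j) d))"
      by (simp only: ennreal_suminf_cmult)
    also have "\<dots> = (\<Sum>j. c * b j * ennreal (sk L (kk j) powr \<beta>) * indicator ({kk j} \<times> Z j) d)"
    proof (intro suminf_cong)
      fix j show "c * ennreal (sk L (fst d) powr \<beta>) * (b j * indicator ({kk j} \<times> Z j) d) =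
          c * b j * ennreal (sk L (kk j) powr \<beta>) * indicator ({kk j} \<times> Z j) d"
        by (cases "d \<in> {kk j} \<times> Z j") (auto simp: mult_ac)
    qed
    finally show "c * ennreal (sk L (fst d) powr \<beta>) * Dz d = (\<Sum>j. c * b j * ennreal (sk L (kk j) powr \<beta>) * indicator ({kk j} \<times> Z j) d)" .
  qed
  also have "\<dots> = (\<Sum>j. (\<integral>\<^sup>+ d. c * b j * ennreal (sk L (kk j) powr \<beta>) * indicator ({kk j} \<times> Z j) d \<partial>count_space D))"
    by (rule nn_integral_suminf) simp
  also have "\<dots> = (\<Sum>j. c * b j * ennreal (sk L (kk j) powr \<beta>) * of_nat (card (Z j)))"
  proof (intro suminf_cong)
    fix j
    have sub: "{kk j} \<times> Z j \<subseteq> D" using ZP by (auto simp: D_def)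
    have "(\<integral>\<^sup>+ d. c * b j * ennreal (sk L (kk j) powr \<beta>) * indicator ({kk j} \<times> Z j) d \<partial>count_space D)
        = c * b j * ennreal (sk L (kk j) powr \<beta>) * emeasure (count_space D) ({kk j} \<times> Z j)"
      by (rule nn_integral_cmult_indicator) (use sub in simp)
    also have "emeasure (count_space D) ({kk j} \<times> Z j) = of_nat (card (Z j))"
      using sub Zfin by (simp add: card_cartesian_product_singleton)
    finally show "(\<integral>\<^sup>+ d. c * b j * ennreal (sk L (kk j) powr \<beta>) * indicator ({kk j} \<times> Z j) d \<partial>count_space D)
        = c * b j * ennreal (sk L (kk j) powr \<beta>) * of_nat (card (Z j))" .
  qed
  also have "\<dots> = (\<Sum>j. c * (b j * of_nat (card (Z j)) * ennreal (sk L (kk j) powr \<beta>)))"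
    by (simp only: mult_ac)
  also have "\<dots> = c * (\<Sum>j. b j * of_nat (card (Z j)) * ennreal (sk L (kk j) powr \<beta>))"
    by (rule ennreal_suminf_cmult)
  finally show ?thesis unfolding c_def .
qed


lemma cball_borel[measurable]: "cball (x::'a::euclidean_space) r \<in> sets borel" by (simp add: borel_closed)
lemma ball_borel[measurable]: "ball (x::'a::euclidean_space) r \<in> sets borel" by (simp add: borel_open)

lemma ennreal_term_le_suminf: "(f j :: ennreal) \<le> suminf f"
  using sum_le_suminf[of f "{j}"] by simp

lemma exists_dyadic_level:
  fixes u :: real assumes "1 \<le> u"
  obtains j :: nat where "2 ^ j \<le> u" "u < 2 ^ Suc j"
proof -
  obtain N where N: "u < 2 ^ N" using real_arch_pow[of 2 u] by auto
  then have ex: "\<exists>m. u < 2 ^ Suc m" by (metis le_less_trans less_imp_le_nat lessI power_strict_increasing_iff one_less_numeral_iff semiring_norm(76) order_le_less)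
  define j where "j = (LEAST m. u < (2::real) ^ Suc m)"
  have j1: "u < 2 ^ Suc j" unfolding j_def by (rule LeastI_ex[OF ex])
  have j2: "2 ^ j \<le> u"
  proof (cases j)
    case 0 then show ?thesis using assms by simp
  next
    case (Suc i)
    then have "\<not> u < 2 ^ Suc i" using not_less_Least[of i "\<lambda>m. u < (2::real) ^ Suc m"] unfolding j_def by auto
    then show ?thesis using Suc by simp
  qed
  show ?thesis using that j1 j2 by blast
qed

lemma emeasure_cball_le:
  fixes c :: "'a::euclidean_space"
  assumes "0 \<le> r"
  shows "emeasure lborel (cball c r) \<le> ennreal ((2 * r) ^ DIM('a))"
proof -
  have "cball c r \<subseteq> cbox (c - r *\<^sub>R One) (c + r *\<^sub>R One)"
  proof
    fix y assume "y \<in> cball c r"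
    then have "norm (y - c) \<le> r" by (simp add: dist_norm norm_minus_commute)
    then have "\<bar>(y - c) \<bullet> i\<bar> \<le> r" if "i \<in> Basis" for i using Basis_le_norm[OF that, of "y - c"] by simp
    then show "y \<in> cbox (c - r *\<^sub>R One) (c + r *\<^sub>R One)"
      by (auto simp: mem_box inner_diff_left inner_add_left abs_le_iff algebra_simps)
  qed
  then have "emeasure lborel (cball c r) \<le> emeasure lborel (cbox (c - r *\<^sub>R One) (c + r *\<^sub>R One))"
    by (intro emeasure_mono) auto
  also have "\<dots> = ennreal (\<Prod>b\<in>(Basis::'a set). 2 * r)"
    using assms by (simp add: emeasure_lborel_cbox_eq inner_diff_left inner_add_left algebra_simps)
  also have "\<dots> = ennreal ((2 * r) ^ DIM('a))" by simp
  finally show ?thesis .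
qed

lemma emeasure_ball_le:
  fixes c :: "'a::euclidean_space"
  assumes "0 \<le> r"
  shows "emeasure lborel (ball c r) \<le> ennreal ((2 * r) ^ DIM('a))"
proof -
  have "emeasure lborel (ball c r) \<le> emeasure lborel (cball c r)" by (rule emeasure_mono) auto
  then show ?thesis using emeasure_cball_le[OF assms, of c] by (rule order_trans)
qed

lemma powr_shell_identity:
  assumes "0 < R" and that: "n = real m"
  shows "(R / 2 ^ Suc j) powr (\<alpha> - n) * (2 * (R / 2 ^ j)) ^ m
       = R powr \<alpha> * 2 powr (2 * n - \<alpha>) * (2 powr (- \<alpha>)) ^ j"
proof -
  define \<rho> where "\<rho> = R / 2 ^ j"
  have \<rho>: "0 < \<rho>" using assms by (simp add: \<rho>_def)
  have eq: "R / 2 ^ Suc j = \<rho> / 2" by (simp add: \<rho>_def)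
  have eq2: "(2 * \<rho>) ^ m = (2 * \<rho>) powr n" using \<rho> that by (simp add: powr_realpow)
  have "(R / 2 ^ Suc j) powr (\<alpha> - n) * (2 * (R / 2 ^ j)) ^ m
      = (\<rho> / 2) powr (\<alpha> - n) * (2 * \<rho>) powr n"
    unfolding eq \<rho>_def[symmetric] eq2 ..
  also have "\<dots> = \<rho> powr \<alpha> * 2 powr (2 * n - \<alpha>)"
    using \<rho> by (simp add: powr_divide powr_mult powr_diff powr_add field_simps flip: powr_add)
  also have "\<rho> powr \<alpha> = R powr \<alpha> * (2 powr (- \<alpha>)) ^ j"
    using assms by (simp add: \<rho>_def powr_divide powr_power powr_minus_divide powr_realpow[symmetric] powr_powr field_simps)
  finally show ?thesis by simp
qed

definition Ck :: "real \<Rightarrow> real \<Rightarrow> real" where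
  "Ck \<alpha> n = 2 powr (2 * n - \<alpha>) / (1 - 2 powr (- \<alpha>))"

lemma Ck_pos: "0 < \<alpha> \<Longrightarrow> 0 < Ck \<alpha> n"
  unfolding Ck_def by (simp add: powr_minus_divide)

lemma kernel_ball:
  fixes x :: "'a::euclidean_space"
  assumes \<alpha>: "0 < \<alpha>" "\<alpha> < real DIM('a)" and R: "0 < R"
  shows "(\<integral>\<^sup>+ y. indicator (ball x R) y * ennreal (dist x y powr (\<alpha> - real DIM('a))) \<partial>lborel)
    \<le> ennreal (Ck \<alpha> (real DIM('a)) * R powr \<alpha>)"
proof -
  let ?n = "real DIM('a)"
  define t where "t j = (R / 2 ^ Suc j) powr (\<alpha> - ?n)" for j :: nat
  have pw: "indicator (ball x R) y * ennreal (dist x y powr (\<alpha> - ?n))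
      \<le> (\<Sum>j. ennreal (t j) * indicator (cball x (R / 2 ^ j)) y)" for y
  proof (cases "y \<in> ball x R \<and> y \<noteq> x")
    case False
    then show ?thesis by (auto simp: indicator_def)
  next
    case True
    define d where "d = dist x y"
    have d: "0 < d" "d < R" using True by (auto simp: d_def)
    then have "1 \<le> R / d" by simp
    then obtain j where j: "2 ^ j \<le> R / d" "R / d < 2 ^ Suc j" by (rule exists_dyadic_level)
    have j1: "d \<le> R / 2 ^ j" using j(1) d by (simp add: field_simps)
    have j2: "R / 2 ^ Suc j < d" using j(2) d by (simp add: field_simps)
    have "d powr (\<alpha> - ?n) \<le> t j" unfolding t_def
      by (rule powr_mono2') (use \<alpha> j2 R in auto)
    then have "indicator (ball x R) y * ennreal (dist x y powr (\<alpha> - ?n)) \<le> ennreal (t j) * indicator (cball x (R / 2 ^ j)) y"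
      using True j1 by (simp add: d_def indicator_def dist_commute ennreal_leI)
    also have "\<dots> \<le> (\<Sum>j. ennreal (t j) * indicator (cball x (R / 2 ^ j)) y)"
      by (rule ennreal_term_le_suminf)
    finally show ?thesis .
  qed
  have "(\<integral>\<^sup>+ y. indicator (ball x R) y * ennreal (dist x y powr (\<alpha> - ?n)) \<partial>lborel)
      \<le> (\<integral>\<^sup>+ y. (\<Sum>j. ennreal (t j) * indicator (cball x (R / 2 ^ j)) y) \<partial>lborel)"
    by (intro nn_integral_mono pw)
  also have "\<dots> = (\<Sum>j. (\<integral>\<^sup>+ y. ennreal (t j) * indicator (cball x (R / 2 ^ j)) y \<partial>lborel))"
    by (rule nn_integral_suminf) measurable
  also have "\<dots> = (\<Sum>j. ennreal (t j) * emeasure lborel (cball x (R / 2 ^ j)))"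
    by (intro suminf_cong nn_integral_cmult_indicator) simp
  also have "\<dots> \<le> (\<Sum>j. ennreal (t j * (2 * (R / 2 ^ j)) ^ DIM('a)))"
  proof (intro suminf_le)
    fix j
    have "emeasure lborel (cball x (R / 2 ^ j)) \<le> ennreal ((2 * (R / 2 ^ j)) ^ DIM('a))"
      by (rule emeasure_cball_le) (use R in simp)
    then show "ennreal (t j) * emeasure lborel (cball x (R / 2 ^ j)) \<le> ennreal (t j * (2 * (R / 2 ^ j)) ^ DIM('a))"
      by (simp add: ennreal_mult' mult_left_mono t_def)
  qed auto
  also have "\<dots> = (\<Sum>j. ennreal (R powr \<alpha> * 2 powr (2 * ?n - \<alpha>) * (2 powr (- \<alpha>)) ^ j))"
    unfolding t_def by (subst powr_shell_identity[OF R refl]) (rule refl)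
  also have "\<dots> = ennreal (R powr \<alpha> * 2 powr (2 * ?n - \<alpha>) * (1 / (1 - 2 powr (- \<alpha>))))"
  proof (rule suminf_ennreal_eq)
    have q: "norm (2 powr (- \<alpha>)) < (1::real)" using \<alpha> by (simp add: powr_minus_divide)
    show "(\<lambda>j. R powr \<alpha> * 2 powr (2 * ?n - \<alpha>) * (2 powr (- \<alpha>)) ^ j) sums (R powr \<alpha> * 2 powr (2 * ?n - \<alpha>) * (1 / (1 - 2 powr (- \<alpha>))))"
      by (intro sums_mult geometric_sums[of "2 powr (- \<alpha>)", simplified] q[simplified])
  qed simp
  also have "\<dots> = ennreal (Ck \<alpha> ?n * R powr \<alpha>)" by (simp add: Ck_def mult.commute)
  finally show ?thesis .
qed


definition Cw :: "real \<Rightarrow> real \<Rightarrow> real" where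
  "Cw \<alpha> n = Ck \<alpha> n * 3 powr \<alpha> + 2 powr (2 * n - \<alpha>)"

lemma Cw_pos: "0 < \<alpha> \<Longrightarrow> 0 < Cw \<alpha> n"
  unfolding Cw_def using Ck_pos[of \<alpha> n] by (intro add_pos_pos mult_pos_pos) auto

lemma kernel_far:
  fixes x c :: "'a::euclidean_space"
  assumes \<alpha>: "0 < \<alpha>" "\<alpha> < real DIM('a)" and r: "0 < r" and d: "2 * r \<le> dist x c"
    and A: "A \<subseteq> ball c r" "A \<in> sets borel"
  shows "(\<integral>\<^sup>+ y. indicator A y * ennreal (dist x y powr (\<alpha> - real DIM('a))) \<partial>lborel)
    \<le> ennreal ((dist x c / 2) powr (\<alpha> - real DIM('a)) * (2 * r) ^ DIM('a))"
proof -
  let ?n = "real DIM('a)"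
  have pw: "indicator A y * ennreal (dist x y powr (\<alpha> - ?n))
      \<le> ennreal ((dist x c / 2) powr (\<alpha> - ?n)) * indicator (ball c r) y" for y
  proof (cases "y \<in> A")
    case True
    then have "dist y c < r" using A(1) by (auto simp: dist_commute)
    then have "dist x c / 2 \<le> dist x y" using d dist_triangle[of x c y] by (simp add: dist_commute)
    then have "dist x y powr (\<alpha> - ?n) \<le> (dist x c / 2) powr (\<alpha> - ?n)"
      by (intro powr_mono2') (use \<alpha> r d in auto)
    then show ?thesis using True A(1) by (auto simp: indicator_def ennreal_leI)
  qed simp
  have "(\<integral>\<^sup>+ y. indicator A y * ennreal (dist x y powr (\<alpha> - ?n)) \<partial>lborel)
      \<le> (\<integral>\<^sup>+ y. ennreal ((dist x c / 2) powr (\<alpha> - ?n)) * indicator (ball c r) y \<partial>lborel)"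
    by (intro nn_integral_mono pw)
  also have "\<dots> = ennreal ((dist x c / 2) powr (\<alpha> - ?n)) * emeasure lborel (ball c r)"
    by (rule nn_integral_cmult_indicator) simp
  also have "\<dots> \<le> ennreal ((dist x c / 2) powr (\<alpha> - ?n)) * ennreal ((2 * r) ^ DIM('a))"
    by (intro mult_left_mono emeasure_ball_le) (use r in auto)
  also have "\<dots> = ennreal ((dist x c / 2) powr (\<alpha> - ?n) * (2 * r) ^ DIM('a))"
    by (simp add: ennreal_mult')
  finally show ?thesis .
qed

lemma kernel_near:
  fixes x c :: "'a::euclidean_space"
  assumes \<alpha>: "0 < \<alpha>" "\<alpha> < real DIM('a)" and r: "0 < r" and d: "dist x c < 2 * r"
    and A: "A \<subseteq> ball c r" "A \<in> sets borel"
  shows "(\<integral>\<^sup>+ y. indicator A y * ennreal (dist x y powr (\<alpha> - real DIM('a))) \<partial>lborel)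
    \<le> ennreal (Ck \<alpha> (real DIM('a)) * (3 * r) powr \<alpha>)"
proof -
  have "A \<subseteq> ball x (3 * r)"
  proof
    fix y assume "y \<in> A"
    then have "dist c y < r" using A(1) by auto
    then show "y \<in> ball x (3 * r)" using d dist_triangle[of x y c] by simp
  qed
  then have "(\<integral>\<^sup>+ y. indicator A y * ennreal (dist x y powr (\<alpha> - real DIM('a))) \<partial>lborel)
      \<le> (\<integral>\<^sup>+ y. indicator (ball x (3 * r)) y * ennreal (dist x y powr (\<alpha> - real DIM('a))) \<partial>lborel)"
    by (intro nn_integral_mono) (auto simp: indicator_def)
  also have "\<dots> \<le> ennreal (Ck \<alpha> (real DIM('a)) * (3 * r) powr \<alpha>)"
    by (rule kernel_ball) (use \<alpha> r in auto)
  finally show ?thesis .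
qed

definition aw :: "real \<Rightarrow> real \<Rightarrow> real \<Rightarrow> real \<Rightarrow> nat \<Rightarrow> real" where
  "aw \<alpha> n r T p = (if 2 ^ p * r \<le> T + r then Cw \<alpha> n * r powr n * (2 ^ p * r) powr (\<alpha> - n) else 0)"

lemma aw_nonneg: "0 < \<alpha> \<Longrightarrow> 0 \<le> aw \<alpha> n r T p"
  unfolding aw_def using Cw_pos[of \<alpha> n] by auto

lemma kernel_annuli:
  fixes x c :: "'a::euclidean_space"
  assumes \<alpha>: "0 < \<alpha>" "\<alpha> < real DIM('a)" and r: "0 < r" and T: "0 \<le> T"
    and A: "A \<subseteq> ball c r" "A \<in> sets borel" and AT: "\<And>y. y \<in> A \<Longrightarrow> dist x y \<le> T"
  shows "(\<integral>\<^sup>+ y. indicator A y * ennreal (dist x y powr (\<alpha> - real DIM('a))) \<partial>lborel)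
    \<le> (\<Sum>p. ennreal (aw \<alpha> (real DIM('a)) r T p) * indicator (ball c (2 ^ Suc p * r)) x)"
proof -
  let ?n = "real DIM('a)"
  let ?L = "(\<integral>\<^sup>+ y. indicator A y * ennreal (dist x y powr (\<alpha> - ?n)) \<partial>lborel)"
  have rn: "r ^ DIM('a) = r powr ?n" using r by (simp add: powr_realpow)
  show ?thesis
  proof (cases "A = {}")
    case True then show ?thesis by simp
  next
    case False
    then obtain y0 where y0: "y0 \<in> A" by blast
    show ?thesis
    proof (cases "dist x c < 2 * r")
      case True
      have "?L \<le> ennreal (Ck \<alpha> ?n * (3 * r) powr \<alpha>)" by (rule kernel_near[OF \<alpha> r True A])
      also have "\<dots> \<le> ennreal (aw \<alpha> ?n r T 0)"
      proof (rule ennreal_leI)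
        have "r powr ?n * r powr (\<alpha> - ?n) = r powr \<alpha>" by (simp add: powr_add[symmetric])
        then have "aw \<alpha> ?n r T 0 = Cw \<alpha> ?n * r powr \<alpha>" using T by (simp add: aw_def mult.assoc)
        moreover have "Ck \<alpha> ?n * (3 * r) powr \<alpha> \<le> Cw \<alpha> ?n * r powr \<alpha>"
          unfolding Cw_def powr_mult using r by (simp add: algebra_simps)
        ultimately show "Ck \<alpha> ?n * (3 * r) powr \<alpha> \<le> aw \<alpha> ?n r T 0" by simp
      qed
      also have "\<dots> = ennreal (aw \<alpha> ?n r T 0) * indicator (ball c (2 ^ Suc 0 * r)) x"
        using True by (simp add: dist_commute)
      also have "\<dots> \<le> (\<Sum>p. ennreal (aw \<alpha> ?n r T p) * indicator (ball c (2 ^ Suc p * r)) x)"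
        by (rule ennreal_term_le_suminf)
      finally show ?thesis .
    next
      case False
      define d where "d = dist x c"
      have d2: "2 * r \<le> d" using False by (simp add: d_def)
      have dT: "d < T + r"
      proof -
        have "dist y0 c < r" using y0 A(1) by (auto simp: dist_commute)
        then show ?thesis using AT[OF y0] dist_triangle[of x c y0] by (simp add: d_def)
      qed
      have "1 \<le> d / r" using d2 r by simp
      then obtain p where p: "2 ^ p \<le> d / r" "d / r < 2 ^ Suc p" by (rule exists_dyadic_level)
      have p1: "2 ^ p * r \<le> d" using p(1) r by (simp add: field_simps)
      have p2: "d < 2 ^ Suc p * r" using p(2) r by (simp add: field_simps)
      have "?L \<le> ennreal ((d / 2) powr (\<alpha> - ?n) * (2 * r) ^ DIM('a))"
        unfolding d_def by (rule kernel_far[OF \<alpha> r d2[unfolded d_def] A])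
      also have "\<dots> \<le> ennreal (aw \<alpha> ?n r T p)"
      proof (rule ennreal_leI)
        have "(d / 2) powr (\<alpha> - ?n) \<le> (2 ^ p * r / 2) powr (\<alpha> - ?n)"
          by (rule powr_mono2') (use \<alpha> r p1 in auto)
        also have "\<dots> = (2 ^ p * r) powr (\<alpha> - ?n) * 2 powr (?n - \<alpha>)"
          by (simp add: powr_divide powr_diff field_simps)
        finally have "(d / 2) powr (\<alpha> - ?n) * (2 powr ?n * r powr ?n) \<le> (2 ^ p * r) powr (\<alpha> - ?n) * 2 powr (?n - \<alpha>) * (2 powr ?n * r powr ?n)"
          by (rule mult_right_mono) (use r in simp)
        also have "(2 ^ p * r) powr (\<alpha> - ?n) * 2 powr (?n - \<alpha>) * (2 powr ?n * r powr ?n) =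
            2 powr (2 * ?n - \<alpha>) * r powr ?n * (2 ^ p * r) powr (\<alpha> - ?n)"
          by (simp add: powr_add[symmetric] algebra_simps)
        also have "\<dots> \<le> Cw \<alpha> ?n * r powr ?n * (2 ^ p * r) powr (\<alpha> - ?n)"
          unfolding Cw_def using Ck_pos[OF \<alpha>(1), of ?n]
          by (intro mult_right_mono) auto
        also have "\<dots> = aw \<alpha> ?n r T p" using p1 dT by (simp add: aw_def)
        finally show "(d / 2) powr (\<alpha> - ?n) * (2 * r) ^ DIM('a) \<le> aw \<alpha> ?n r T p"
          using r by (simp add: power_mult_distrib powr_realpow)
      qed
      also have "\<dots> = ennreal (aw \<alpha> ?n r T p) * indicator (ball c (2 ^ Suc p * r)) x"
        using p2 by (simp add: d_def dist_commute)
      also have "\<dots> \<le> (\<Sum>p. ennreal (aw \<alpha> ?n r T p) * indicator (ball c (2 ^ Suc p * r)) x)"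
        by (rule ennreal_term_le_suminf)
      finally show ?thesis .
    qed
  qed
qed


definition klev :: "real \<Rightarrow> real \<Rightarrow> nat" where
  "klev L \<rho> = (LEAST k. L / 2 ^ Suc k < 2 * \<rho>)"

lemma klev:
  assumes L: "0 < L" and \<rho>: "0 < \<rho>" "2 * \<rho> \<le> L"
  shows "2 * \<rho> \<le> sk L (klev L \<rho>)" "sk L (klev L \<rho>) < 4 * \<rho>"
proof -
  obtain N where N: "L / (2 * \<rho>) < 2 ^ N" using real_arch_pow[of 2 "L / (2 * \<rho>)"] by auto
  have "L / 2 ^ Suc N < 2 * \<rho>"
  proof -
    have "L < 2 ^ N * (2 * \<rho>)" using N \<rho> by (simp add: field_simps)
    also have "\<dots> \<le> 2 ^ Suc N * (2 * \<rho>)" using \<rho> by simp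
    finally show ?thesis by (simp add: field_simps)
  qed
  then have ex: "\<exists>k. L / 2 ^ Suc k < 2 * \<rho>" by blast
  have k1: "L / 2 ^ Suc (klev L \<rho>) < 2 * \<rho>" unfolding klev_def by (rule LeastI_ex[OF ex])
  then show "sk L (klev L \<rho>) < 4 * \<rho>" by (simp add: sk_def field_simps)
  show "2 * \<rho> \<le> sk L (klev L \<rho>)"
  proof (cases "klev L \<rho>")
    case 0 then show ?thesis using \<rho> by (simp add: sk_def)
  next
    case (Suc m)
    then have "\<not> L / 2 ^ Suc m < 2 * \<rho>"
      using not_less_Least[of m "\<lambda>k. L / 2 ^ Suc k < 2 * \<rho>"] unfolding klev_def by auto
    then show ?thesis using Suc by (simp add: sk_def)
  qed
qed

definition Zb :: "real \<Rightarrow> nat \<Rightarrow> 'a::euclidean_space \<Rightarrow> real \<Rightarrow> ('a \<Rightarrow> int) set" where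
  "Zb L k c \<rho> = PiE Basis (\<lambda>i. {\<lfloor>(c \<bullet> i - \<rho>) / sk L k\<rfloor>, \<lfloor>(c \<bullet> i - \<rho>) / sk L k\<rfloor> + 1})"

lemma Zb_finite: "finite (Zb L k c \<rho>)"
  unfolding Zb_def by (intro finite_PiE) auto

lemma Zb_sub: "Zb L k c \<rho> \<subseteq> PiE Basis (\<lambda>_. UNIV)"
  unfolding Zb_def by (auto simp: PiE_def Pi_def)

lemma Zb_card: "card (Zb L k (c::'a::euclidean_space) \<rho>) = 2 ^ DIM('a)"
  unfolding Zb_def by (simp add: card_PiE numeral_2_eq_2)

lemma ball_in_Zb:
  assumes L: "0 < L" and \<rho>: "0 < \<rho>" and s: "2 * \<rho> \<le> sk L k" and x: "x \<in> ball c \<rho>"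
  shows "idx L k x \<in> Zb L k c \<rho>"
  unfolding Zb_def idx_def
proof (intro restrict_PiE_iff[THEN iffD2] ballI)
  fix i :: 'a assume i: "i \<in> Basis"
  define s' where "s' = sk L k"
  have s0: "0 < s'" using sk_pos[OF L] by (simp add: s'_def)
  have "\<bar>(x - c) \<bullet> i\<bar> < \<rho>"
    using Basis_le_norm[OF i, of "x - c"] x by (simp add: dist_norm norm_minus_commute)
  then have xi: "c \<bullet> i - \<rho> < x \<bullet> i" "x \<bullet> i < c \<bullet> i - \<rho> + s'"
    using s by (auto simp: inner_diff_left s'_def abs_less_iff)
  have "\<lfloor>(c \<bullet> i - \<rho>) / s'\<rfloor> \<le> \<lfloor>(x \<bullet> i) / s'\<rfloor>"
    by (intro floor_mono divide_right_mono) (use xi s0 in auto)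
  moreover have "\<lfloor>(x \<bullet> i) / s'\<rfloor> \<le> \<lfloor>(c \<bullet> i - \<rho>) / s' + 1\<rfloor>"
    by (intro floor_mono) (use xi s0 in \<open>simp add: field_simps\<close>)
  ultimately show "\<lfloor>(x \<bullet> i) / sk L k\<rfloor> \<in> {\<lfloor>(c \<bullet> i - \<rho>) / sk L k\<rfloor>, \<lfloor>(c \<bullet> i - \<rho>) / sk L k\<rfloor> + 1}"
    unfolding s'_def by auto
qed


lemma geo_bound:
  fixes q :: real assumes "1 < q"
  shows "(\<Sum>p<Suc P. q ^ p) \<le> q ^ Suc P / (q - 1)"
proof -
  have "(\<Sum>p<Suc P. q ^ p) = (q ^ Suc P - 1) / (q - 1)"
    using assms by (intro geometric_sum) simp
  also have "\<dots> \<le> q ^ Suc P / (q - 1)" using assms by (intro divide_right_mono) auto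
  finally show ?thesis .
qed

definition Cc :: "real \<Rightarrow> real \<Rightarrow> real \<Rightarrow> real" where
  "Cc \<alpha> \<beta> n = Cw \<alpha> n * 8 powr \<beta> * (2 powr \<alpha> / (2 powr \<alpha> - 1))"

lemma Cc_pos: "0 < \<alpha> \<Longrightarrow> 0 < Cc \<alpha> \<beta> n"
  unfolding Cc_def using Cw_pos[of \<alpha> n] by (intro mult_pos_pos divide_pos_pos) auto

lemma cost_sum:
  assumes \<alpha>: "0 < \<alpha>" and \<beta>: "0 < \<beta>" "\<beta> \<le> n" and r: "0 < r" and T: "0 \<le> T"
  shows "(\<Sum>p. ennreal (aw \<alpha> n r T p * (8 * (2 ^ p * r)) powr \<beta>))
     \<le> ennreal (Cc \<alpha> \<beta> n * r powr \<beta> * (T + r) powr \<alpha>)"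
proof -
  define X where "X = T + r"
  define q where "q = 2 powr \<alpha>"
  have q1: "1 < q" using \<alpha> by (simp add: q_def)
  have "1 \<le> X / r" using T r by (simp add: X_def)
  then obtain P where P: "2 ^ P \<le> X / r" "X / r < 2 ^ Suc P" by (rule exists_dyadic_level)
  have PX: "2 ^ P * r \<le> X" using P(1) r by (simp add: field_simps)
  define K where "K = Cw \<alpha> n * 8 powr \<beta> * r powr \<beta> * r powr \<alpha>"
  have K0: "0 \<le> K" using Cw_pos[OF \<alpha>, of n] by (simp add: K_def)
  define g where "g p = (if p < Suc P then K * q ^ p else 0)" for p
  have tg: "aw \<alpha> n r T p * (8 * (2 ^ p * r)) powr \<beta> \<le> g p" for p
  proof (cases "2 ^ p * r \<le> X")
    case False
    then show ?thesis using K0 q1 by (simp add: aw_def X_def g_def)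
  next
    case True
    have rp: "r \<le> 2 ^ p * r" using r by simp
    have pP: "p < Suc P"
    proof -
      have a: "X < 2 ^ Suc P * r" using P(2) r by (simp add: field_simps)
      have "2 ^ p * r < 2 ^ Suc P * r" using True a by linarith
      then have "(2::real) ^ p < 2 ^ Suc P" using r by (simp only: mult_less_cancel_right)
      then show ?thesis by (metis power_strict_increasing_iff one_less_numeral_iff semiring_norm(76))
    qed
    have "aw \<alpha> n r T p * (8 * (2 ^ p * r)) powr \<beta>
        = Cw \<alpha> n * 8 powr \<beta> * (r powr n * (2 ^ p * r) powr (\<beta> - n)) * (2 ^ p * r) powr \<alpha>"
      using True r by (simp add: aw_def X_def powr_mult powr_diff powr_add field_simps)
    also have "\<dots> \<le> Cw \<alpha> n * 8 powr \<beta> * (r powr n * r powr (\<beta> - n)) * (2 ^ p * r) powr \<alpha>"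
    proof -
      have "(2 ^ p * r) powr (\<beta> - n) \<le> r powr (\<beta> - n)"
        by (rule powr_mono2') (use \<beta> r rp in auto)
      then show ?thesis using Cw_pos[OF \<alpha>, of n]
        by (intro mult_right_mono mult_left_mono) auto
    qed
    also have "r powr n * r powr (\<beta> - n) = r powr \<beta>" by (simp add: powr_add[symmetric])
    also have "(2 ^ p * r) powr \<alpha> = r powr \<alpha> * q ^ p"
      using r by (simp add: powr_mult q_def powr_power powr_realpow[symmetric] powr_powr mult.commute)
    finally show ?thesis using pP by (simp add: g_def K_def mult_ac)
  qed
  have "(\<Sum>p. ennreal (aw \<alpha> n r T p * (8 * (2 ^ p * r)) powr \<beta>)) \<le> (\<Sum>p. ennreal (g p))"
    by (intro suminf_le ennreal_leI tg) auto
  also have "\<dots> = (\<Sum>p<Suc P. ennreal (g p))"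
    by (rule suminf_finite) (auto simp: g_def)
  also have "\<dots> = ennreal (\<Sum>p<Suc P. g p)"
    using K0 q1 by (intro sum_ennreal) (simp add: g_def)
  also have "\<dots> \<le> ennreal (Cc \<alpha> \<beta> n * r powr \<beta> * X powr \<alpha>)"
  proof (rule ennreal_leI)
    have "(\<Sum>p<Suc P. g p) = K * (\<Sum>p<Suc P. q ^ p)"
      unfolding sum_distrib_left by (intro sum.cong) (auto simp: g_def)
    also have "\<dots> \<le> K * (q ^ Suc P / (q - 1))" by (intro mult_left_mono geo_bound q1 K0)
    also have "\<dots> = Cw \<alpha> n * 8 powr \<beta> * (q / (q - 1)) * r powr \<beta> * (r powr \<alpha> * q ^ P)"
      by (simp add: K_def field_simps)
    also have "r powr \<alpha> * q ^ P = (2 ^ P * r) powr \<alpha>"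
      using r by (simp add: powr_mult q_def powr_power powr_realpow[symmetric] powr_powr mult.commute)
    also have "Cw \<alpha> n * 8 powr \<beta> * (q / (q - 1)) * r powr \<beta> * (2 ^ P * r) powr \<alpha>
        \<le> Cw \<alpha> n * 8 powr \<beta> * (q / (q - 1)) * r powr \<beta> * X powr \<alpha>"
      using PX r \<alpha> Cw_pos[OF \<alpha>, of n] q1 by (intro mult_left_mono powr_mono2) auto
    finally show "(\<Sum>p<Suc P. g p) \<le> Cc \<alpha> \<beta> n * r powr \<beta> * X powr \<alpha>"
      by (simp add: Cc_def q_def)
  qed
  finally show ?thesis by (simp add: X_def)
qed


lemma aw_zero: "aw \<alpha> n 0 T p = 0"
  unfolding aw_def by simp

lemma ball_term:
  fixes x c :: "'a::euclidean_space"
  assumes \<alpha>: "0 < \<alpha>" "\<alpha> < real DIM('a)" and L: "0 < L" and r: "0 \<le> r" and T: "0 \<le> T"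
    and LT: "4 * (T + r) \<le> L"
    and A: "A \<subseteq> ball c r" "A \<in> sets borel" and AT: "\<And>y. y \<in> A \<Longrightarrow> dist x y \<le> T"
  shows "(\<integral>\<^sup>+ y. indicator A y * ennreal (dist x y powr (\<alpha> - real DIM('a))) \<partial>lborel)
    \<le> (\<Sum>p. ennreal (aw \<alpha> (real DIM('a)) r T p) *
        indicator (Zb L (klev L (2 ^ Suc p * r)) c (2 ^ Suc p * r)) (idx L (klev L (2 ^ Suc p * r)) x))"
proof (cases "r = 0")
  case True
  then have "A = {}" using A(1) by auto
  then show ?thesis by simp
next
  case False
  then have r0: "0 < r" using r by simp
  have "(\<integral>\<^sup>+ y. indicator A y * ennreal (dist x y powr (\<alpha> - real DIM('a))) \<partial>lborel)
    \<le> (\<Sum>p. ennreal (aw \<alpha> (real DIM('a)) r T p) * indicator (ball c (2 ^ Suc p * r)) x)"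
    by (rule kernel_annuli[OF \<alpha> r0 T A AT])
  also have "\<dots> \<le> (\<Sum>p. ennreal (aw \<alpha> (real DIM('a)) r T p) *
        indicator (Zb L (klev L (2 ^ Suc p * r)) c (2 ^ Suc p * r)) (idx L (klev L (2 ^ Suc p * r)) x))"
  proof (intro suminf_le)
    fix p
    show "ennreal (aw \<alpha> (real DIM('a)) r T p) * indicator (ball c (2 ^ Suc p * r)) x \<le>
      ennreal (aw \<alpha> (real DIM('a)) r T p) *
        indicator (Zb L (klev L (2 ^ Suc p * r)) c (2 ^ Suc p * r)) (idx L (klev L (2 ^ Suc p * r)) x)"
    proof (cases "2 ^ p * r \<le> T + r \<and> x \<in> ball c (2 ^ Suc p * r)")
      case True
      define \<rho> where "\<rho> = 2 ^ Suc p * r"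
      have \<rho>0: "0 < \<rho>" using r0 by (simp add: \<rho>_def)
      have "2 * \<rho> \<le> L" using True LT by (simp add: \<rho>_def)
      then have "2 * \<rho> \<le> sk L (klev L \<rho>)" using klev(1)[OF L \<rho>0] by simp
      then have "idx L (klev L \<rho>) x \<in> Zb L (klev L \<rho>) c \<rho>"
        by (rule ball_in_Zb[OF L \<rho>0]) (use True in \<open>simp add: \<rho>_def\<close>)
      then show ?thesis by (simp add: \<rho>_def indicator_def)
    next
      case False
      then have "aw \<alpha> (real DIM('a)) r T p = 0 \<or> x \<notin> ball c (2 ^ Suc p * r)" by (auto simp: aw_def)
      then show ?thesis by auto
    qed
  qed auto
  finally show ?thesis .
qed

lemma ball_cost:
  fixes c :: "'a::euclidean_space"
  assumes \<alpha>: "0 < \<alpha>" and \<beta>: "0 < \<beta>" "\<beta> \<le> real DIM('a)" and L: "0 < L" and r: "0 \<le> r" and T: "0 \<le> T"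
    and LT: "4 * (T + r) \<le> L"
  shows "(\<Sum>p. ennreal (aw \<alpha> (real DIM('a)) r T p) * of_nat (card (Zb L (klev L (2 ^ Suc p * r)) c (2 ^ Suc p * r)))
            * ennreal (sk L (klev L (2 ^ Suc p * r)) powr \<beta>))
     \<le> ennreal (2 ^ DIM('a) * Cc \<alpha> \<beta> (real DIM('a)) * r powr \<beta> * (T + r) powr \<alpha>)"
proof (cases "r = 0")
  case True
  then show ?thesis by (simp add: aw_zero)
next
  case False
  then have r0: "0 < r" using r by simp
  let ?n = "real DIM('a)"
  have "(\<Sum>p. ennreal (aw \<alpha> ?n r T p) * of_nat (card (Zb L (klev L (2 ^ Suc p * r)) c (2 ^ Suc p * r)))
            * ennreal (sk L (klev L (2 ^ Suc p * r)) powr \<beta>))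
      \<le> (\<Sum>p. ennreal (2 ^ DIM('a)) * ennreal (aw \<alpha> ?n r T p * (8 * (2 ^ p * r)) powr \<beta>))"
  proof (intro suminf_le)
    fix p
    show "ennreal (aw \<alpha> ?n r T p) * of_nat (card (Zb L (klev L (2 ^ Suc p * r)) c (2 ^ Suc p * r)))
            * ennreal (sk L (klev L (2 ^ Suc p * r)) powr \<beta>)
        \<le> ennreal (2 ^ DIM('a)) * ennreal (aw \<alpha> ?n r T p * (8 * (2 ^ p * r)) powr \<beta>)"
    proof (cases "2 ^ p * r \<le> T + r")
      case True
      define \<rho> where "\<rho> = 2 ^ Suc p * r"
      have \<rho>0: "0 < \<rho>" using r0 by (simp add: \<rho>_def)
      have "2 * \<rho> \<le> L" using True LT by (simp add: \<rho>_def)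
      then have "sk L (klev L \<rho>) < 4 * \<rho>" using klev(2)[OF L \<rho>0] by simp
      then have "sk L (klev L \<rho>) powr \<beta> \<le> (8 * (2 ^ p * r)) powr \<beta>"
        using sk_pos[OF L, of "klev L \<rho>"] \<beta> by (intro powr_mono2) (auto simp: \<rho>_def)
      then have "aw \<alpha> ?n r T p * sk L (klev L \<rho>) powr \<beta> \<le> aw \<alpha> ?n r T p * (8 * (2 ^ p * r)) powr \<beta>"
        by (intro mult_left_mono aw_nonneg \<alpha>)
      then have "ennreal (aw \<alpha> ?n r T p) * ennreal (sk L (klev L \<rho>) powr \<beta>) \<le> ennreal (aw \<alpha> ?n r T p * (8 * (2 ^ p * r)) powr \<beta>)"
        using aw_nonneg[OF \<alpha>] by (simp add: ennreal_mult'[symmetric] ennreal_leI)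
      then show ?thesis
        unfolding \<rho>_def[symmetric] Zb_card
        by (simp add: mult_ac mult_left_mono ennreal_power[symmetric])
    next
      case False
      then show ?thesis by (simp add: aw_def)
    qed
  qed auto
  also have "\<dots> = ennreal (2 ^ DIM('a)) * (\<Sum>p. ennreal (aw \<alpha> ?n r T p * (8 * (2 ^ p * r)) powr \<beta>))"
    by (rule ennreal_suminf_cmult)
  also have "\<dots> \<le> ennreal (2 ^ DIM('a)) * ennreal (Cc \<alpha> \<beta> ?n * r powr \<beta> * (T + r) powr \<alpha>)"
    by (intro mult_left_mono cost_sum \<alpha> \<beta> r0 T) auto
  also have "\<dots> = ennreal (2 ^ DIM('a) * Cc \<alpha> \<beta> ?n * r powr \<beta> * (T + r) powr \<alpha>)"
    by (simp add: ennreal_mult'[symmetric] mult.assoc)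
  finally show ?thesis .
qed


lemma suminf_3dimen:
  fixes F :: "nat \<Rightarrow> nat \<Rightarrow> nat \<Rightarrow> ennreal"
  shows "(\<Sum>j. F (fst (prod_decode j)) (fst (prod_decode (snd (prod_decode j)))) (snd (prod_decode (snd (prod_decode j)))))
    = (\<Sum>m. \<Sum>i. \<Sum>p. F m i p)"
proof -
  have inner: "(\<Sum>n. F m (fst (prod_decode n)) (snd (prod_decode n))) = (\<Sum>i. \<Sum>p. F m i p)" for m
    using suminf_ennreal_2dimen[where f = "\<lambda>ip. F m (fst ip) (snd ip)" and g = "\<lambda>i. \<Sum>p. F m i p"] by simp
  show ?thesis
    using suminf_ennreal_2dimen[where f = "\<lambda>mn. F (fst mn) (fst (prod_decode (snd mn))) (snd (prod_decode (snd mn)))"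
        and g = "\<lambda>m. \<Sum>i. \<Sum>p. F m i p"] inner by simp
qed

lemma cube2_sub_ball:
  fixes x0 :: "'a::euclidean_space"
  assumes "0 < l"
  shows "cube x0 (2 * l) \<subseteq> ball x0 (real DIM('a) * l)"
proof
  fix x assume "x \<in> cube x0 (2 * l)"
  then have "\<bar>(x - x0) \<bullet> i\<bar> < l" if "i \<in> Basis" for i using that by (simp add: cube_def)
  then have "(\<Sum>i\<in>Basis. \<bar>(x - x0) \<bullet> i\<bar>) < (\<Sum>i\<in>(Basis::'a set). l)"
    by (intro sum_strict_mono) auto
  then have "norm (x - x0) < real DIM('a) * l" using norm_le_l1[of "x - x0"] by simp
  then show "x \<in> ball x0 (real DIM('a) * l)" by (simp add: dist_norm norm_minus_commute)
qed

lemma cube_mono2: "0 < l \<Longrightarrow> cube x0 l \<subseteq> cube x0 (2 * l)"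
  by (auto simp: cube_def)

lemma cube_open: "open (cube (x0::'a::euclidean_space) l)"
proof -
  have "cube x0 l = (\<Inter>i\<in>Basis. {x. \<bar>(x - x0) \<bullet> i\<bar> < l / 2})" by (auto simp: cube_def)
  also have "open \<dots>"
    by (intro open_INT finite_Basis ballI open_Collect_less continuous_intros)
  finally show ?thesis .
qed

lemma cube_borel[measurable]: "cube (x0::'a::euclidean_space) l \<in> sets borel"
  using cube_open by (rule borel_open)

lemma cover_cap:
  fixes E :: "'a::euclidean_space set"
  assumes \<beta>: "0 < \<beta>" and E: "E \<subseteq> ball x0 R0" and R0: "0 < R0" and \<delta>: "0 < \<delta>"
  obtains c r where "\<And>i. 0 \<le> r i" "\<And>i. r i \<le> R0" "E \<subseteq> (\<Union>i. ball (c i) (r i))"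
    "(\<Sum>i. ennreal (omega \<beta> * r i powr \<beta>)) < hcontent \<beta> E + ennreal \<delta>"
proof -
  have "hcontent \<beta> E \<le> ennreal (omega \<beta> * R0 powr \<beta>)" by (rule hcontent_ball[OF _ \<beta> E]) (use R0 in simp)
  moreover have "ennreal (omega \<beta> * R0 powr \<beta>) < \<infinity>" by simp
  ultimately have fin: "hcontent \<beta> E < \<infinity>" by (rule le_less_trans)
  obtain c r where cr: "\<And>i. 0 \<le> r i" "E \<subseteq> (\<Union>i. ball (c i) (r i))"
    "(\<Sum>i. ennreal (omega \<beta> * r i powr \<beta>)) < hcontent \<beta> E + ennreal \<delta>"
    by (rule hcontent_near[OF fin \<delta>]) blast
  define r' where "r' i = min (r i) R0" for i
  define c' where "c' i = (if r i \<le> R0 then c i else x0)" for i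
  show ?thesis
  proof (rule that[of r' c'])
    show "0 \<le> r' i" for i using cr(1)[of i] R0 by (simp add: r'_def)
    show "r' i \<le> R0" for i by (simp add: r'_def)
    show "E \<subseteq> (\<Union>i. ball (c' i) (r' i))"
    proof
      fix x assume x: "x \<in> E"
      then obtain i where i: "x \<in> ball (c i) (r i)" using cr(2) by blast
      have "x \<in> ball (c' i) (r' i)"
      proof (cases "r i \<le> R0")
        case True then show ?thesis using i by (simp add: c'_def r'_def)
      next
        case False then show ?thesis using x E by (auto simp: c'_def r'_def)
      qed
      then show "x \<in> (\<Union>i. ball (c' i) (r' i))" by blast
    qed
    have "(\<Sum>i. ennreal (omega \<beta> * r' i powr \<beta>)) \<le> (\<Sum>i. ennreal (omega \<beta> * r i powr \<beta>))"
    proof (intro suminf_le ennreal_leI mult_left_mono powr_mono2)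
      fix i
      show "0 \<le> r' i" using cr(1)[of i] R0 by (simp add: r'_def)
      show "r' i \<le> r i" by (simp add: r'_def)
    qed (use omega_pos[OF \<beta>] \<beta> in auto)
    then show "(\<Sum>i. ennreal (omega \<beta> * r' i powr \<beta>)) < hcontent \<beta> E + ennreal \<delta>"
      using cr(3) by (rule le_less_trans)
  qed
qed


lemma level_sum_bound:
  fixes \<phi> :: "real \<Rightarrow> ennreal"
  assumes anti: "\<And>s s'. 0 < s \<Longrightarrow> s \<le> s' \<Longrightarrow> \<phi> s' \<le> \<phi> s"
  shows "(\<Sum>m. ennreal (2 powr real_of_int (int_decode m)) * \<phi> (2 powr real_of_int (int_decode m)))
    \<le> 2 * (\<integral>\<^sup>+ s. \<phi> s * indicator {0..} s \<partial>lborel)"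
proof -
  define t where "t m = real_of_int (int_decode m)" for m
  define I where "I m = {2 powr (t m - 1) <.. 2 powr (t m)}" for m
  have inI: "int_decode m = \<lceil>log 2 s\<rceil>" if "s \<in> I m" for s m
  proof -
    have s0: "0 < s" using that by (auto simp: I_def intro: le_less_trans[OF _ _ ] less_le_trans[of 0 "2 powr (t m - 1)"])
    have "t m - 1 < log 2 s" using that s0 by (simp add: I_def less_log_iff)
    moreover have "log 2 s \<le> t m" using that s0 by (simp add: I_def log_le_iff)
    ultimately show ?thesis by (intro ceiling_unique[symmetric]) (simp_all add: t_def)
  qed
  have pw: "(\<Sum>m. \<phi> (2 powr t m) * indicator (I m) s) \<le> \<phi> s * indicator {0..} s" for s
  proof (cases "0 < s")
    case False
    have "s \<notin> I m" for m
    proof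
      assume "s \<in> I m"
      then have "2 powr (t m - 1) < s" by (simp add: I_def)
      moreover have "0 < 2 powr (t m - 1)" by simp
      ultimately show False using False by simp
    qed
    then show ?thesis by simp
  next
    case True
    define K where "K = \<lceil>log 2 s\<rceil>"
    have "(\<Sum>m. \<phi> (2 powr t m) * indicator (I m) s) = (\<Sum>m\<in>{int_encode K}. \<phi> (2 powr t m) * indicator (I m) s)"
    proof (rule suminf_finite)
      fix m assume "m \<notin> {int_encode K}"
      then have "int_decode m \<noteq> K" by auto
      then show "\<phi> (2 powr t m) * indicator (I m) s = 0" using inI[of s m] by (auto simp: K_def indicator_def)
    qed simp
    also have "\<dots> \<le> \<phi> s * indicator {0..} s"
    proof (cases "s \<in> I (int_encode K)")
      case True
      then have "s \<le> 2 powr t (int_encode K)" by (simp add: I_def)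
      then have "\<phi> (2 powr t (int_encode K)) \<le> \<phi> s" using \<open>0 < s\<close> by (intro anti)
      then show ?thesis using True \<open>0 < s\<close> by simp
    qed simp
    finally show ?thesis .
  qed
  have meas: "emeasure lborel (I m) = ennreal (2 powr t m / 2)" for m
  proof -
    have "2 powr (t m - 1) \<le> 2 powr t m" by simp
    then have "emeasure lborel (I m) = ennreal (2 powr t m - 2 powr (t m - 1))" by (simp add: I_def)
    also have "2 powr t m - 2 powr (t m - 1) = 2 powr t m / 2" by (simp add: powr_diff)
    finally show ?thesis .
  qed
  have "(\<Sum>m. ennreal (2 powr t m) * \<phi> (2 powr t m)) = (\<Sum>m. 2 * (\<phi> (2 powr t m) * ennreal (2 powr t m / 2)))"
  proof (intro suminf_cong)
    fix m
    have "ennreal (2 powr t m) = ennreal (2 * (2 powr t m / 2))" by simp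
    also have "\<dots> = 2 * ennreal (2 powr t m / 2)"
      using ennreal_mult[of 2 "2 powr t m / 2"] by simp
    finally have "ennreal (2 powr t m) = 2 * ennreal (2 powr t m / 2)" .
    then show "ennreal (2 powr t m) * \<phi> (2 powr t m) = 2 * (\<phi> (2 powr t m) * ennreal (2 powr t m / 2))"
      by (simp add: mult_ac)
  qed
  also have "\<dots> = 2 * (\<Sum>m. \<phi> (2 powr t m) * emeasure lborel (I m))"
    by (simp add: meas)
  also have "(\<Sum>m. \<phi> (2 powr t m) * emeasure lborel (I m)) = (\<Sum>m. \<integral>\<^sup>+ s. \<phi> (2 powr t m) * indicator (I m) s \<partial>lborel)"
    by (intro suminf_cong nn_integral_cmult_indicator[symmetric]) (simp add: I_def)
  also have "\<dots> = (\<integral>\<^sup>+ s. (\<Sum>m. \<phi> (2 powr t m) * indicator (I m) s) \<partial>lborel)"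
    by (rule nn_integral_suminf[symmetric]) (simp add: I_def)
  also have "\<dots> \<le> (\<integral>\<^sup>+ s. \<phi> s * indicator {0..} s \<partial>lborel)"
    by (intro nn_integral_mono pw)
  finally show ?thesis by (simp add: t_def mult_left_mono)
qed


lemma f_decomp:
  fixes f :: "'a::euclidean_space \<Rightarrow> real" and Q2 :: "'a set"
  assumes supp: "closure {x. f x \<noteq> 0} \<subseteq> Q2"
    and cov: "\<And>m. {x\<in>Q2. \<bar>f x\<bar> > 2 powr real_of_int (int_decode m)} \<subseteq> (\<Union>i. ball (c m i) (r m i))"
  shows "ennreal \<bar>f y\<bar> \<le> (\<Sum>m. \<Sum>i. ennreal (2 * 2 powr real_of_int (int_decode m)) * indicator (ball (c m i) (r m i) \<inter> Q2) y)"
proof (cases "f y = 0")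
  case True then show ?thesis by simp
next
  case False
  then have "y \<in> {x. f x \<noteq> 0}" by simp
  then have "y \<in> closure {x. f x \<noteq> 0}" by (rule subsetD[OF closure_subset])
  then have yQ: "y \<in> Q2" using supp by (rule subsetD[rotated])
  define F where "F = \<bar>f y\<bar>"
  have F0: "0 < F" using False by (simp add: F_def)
  define K where "K = \<lceil>log 2 F\<rceil> - 1"
  have K1: "2 powr real_of_int K < F"
  proof -
    have "real_of_int K < log 2 F" unfolding K_def by linarith
    then show ?thesis using F0 by (simp add: less_log_iff)
  qed
  have K2: "F \<le> 2 * 2 powr real_of_int K"
  proof -
    have "log 2 F \<le> real_of_int K + 1" unfolding K_def by linarith
    then have "F \<le> 2 powr (real_of_int K + 1)" using F0 by (simp add: log_le_iff)
    then show ?thesis by (simp add: powr_add)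
  qed
  define m where "m = int_encode K"
  have mK: "int_decode m = K" by (simp add: m_def)
  have "y \<in> {x\<in>Q2. \<bar>f x\<bar> > 2 powr real_of_int (int_decode m)}" using yQ K1 mK by (simp add: F_def)
  then have "y \<in> (\<Union>i. ball (c m i) (r m i))" using cov[of m] by (rule subsetD[rotated])
  then obtain i where i: "y \<in> ball (c m i) (r m i)" by (rule UN_E)
  have "ennreal \<bar>f y\<bar> \<le> ennreal (2 * 2 powr real_of_int (int_decode m)) * indicator (ball (c m i) (r m i) \<inter> Q2) y"
    using K2 mK i yQ by (simp add: F_def ennreal_leI)
  also have "\<dots> \<le> (\<Sum>i. ennreal (2 * 2 powr real_of_int (int_decode m)) * indicator (ball (c m i) (r m i) \<inter> Q2) y)"
    by (rule ennreal_term_le_suminf)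
  also have "\<dots> \<le> (\<Sum>m. \<Sum>i. ennreal (2 * 2 powr real_of_int (int_decode m)) * indicator (ball (c m i) (r m i) \<inter> Q2) y)"
    by (rule ennreal_term_le_suminf)
  finally show ?thesis .
qed

lemma riesz_le:
  fixes f :: "'a::euclidean_space \<Rightarrow> real"
  shows "ennreal \<bar>riesz \<alpha> f x\<bar> \<le> (\<integral>\<^sup>+ y. ennreal \<bar>f y\<bar> * ennreal (dist x y powr (\<alpha> - real DIM('a))) \<partial>lborel)"
proof (cases "integrable lebesgue (\<lambda>y. f y * dist x y powr (\<alpha> - real DIM('a)))")
  case True
  have "ennreal \<bar>riesz \<alpha> f x\<bar> \<le> (\<integral>\<^sup>+ y. norm (f y * dist x y powr (\<alpha> - real DIM('a))) \<partial>lebesgue)"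
    unfolding riesz_def using integral_norm_bound_ennreal[OF True] by simp
  also have "\<dots> = (\<integral>\<^sup>+ y. ennreal \<bar>f y\<bar> * ennreal (dist x y powr (\<alpha> - real DIM('a))) \<partial>lborel)"
    by (simp add: nn_integral_completion abs_mult ennreal_mult)
  finally show ?thesis .
next
  case False
  then show ?thesis by (simp add: riesz_def not_integrable_integral_eq)
qed


definition KLk :: "real \<Rightarrow> real \<Rightarrow> nat \<Rightarrow> nat" where "KLk L r p = klev L (2 ^ Suc p * r)"
definition ZZ :: "real \<Rightarrow> 'a::euclidean_space \<Rightarrow> real \<Rightarrow> nat \<Rightarrow> ('a \<Rightarrow> int) set" where
  "ZZ L c r p = Zb L (KLk L r p) c (2 ^ Suc p * r)"

lemma riesz_pointwise:
  fixes x0 x :: "'a::euclidean_space" and f :: "'a \<Rightarrow> real"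
  assumes \<alpha>: "0 < \<alpha>" "\<alpha> < real DIM('a)" and l: "0 < l"
    and supp: "closure {x. f x \<noteq> 0} \<subseteq> cube x0 (2 * l)"
    and cov: "\<And>m. {x\<in>cube x0 (2 * l). \<bar>f x\<bar> > 2 powr real_of_int (int_decode m)} \<subseteq> (\<Union>i. ball (c m i) (r m i))"
    and r0: "\<And>m i. 0 \<le> r m i" and rR: "\<And>m i. r m i \<le> real DIM('a) * l"
    and x: "x \<in> cube x0 l"
  shows "ennreal \<bar>riesz \<alpha> f x\<bar> \<le> (\<Sum>m. \<Sum>i. \<Sum>p. ennreal (2 * 2 powr real_of_int (int_decode m)) *
      ennreal (aw \<alpha> (real DIM('a)) (r m i) (2 * real DIM('a) * l) p) *
      indicator (ZZ (12 * real DIM('a) * l) (c m i) (r m i) p) (idx (12 * real DIM('a) * l) (KLk (12 * real DIM('a) * l) (r m i) p) x))"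
proof -
  let ?n = "real DIM('a)"
  let ?Q2 = "cube x0 (2 * l)"
  define L where "L = 12 * ?n * l"
  define T where "T = 2 * ?n * l"
  define a where "a m = ennreal (2 * 2 powr real_of_int (int_decode m))" for m
  define K where "K y = ennreal (dist x y powr (\<alpha> - ?n))" for y
  have n0: "0 < ?n" by simp
  have L0: "0 < L" using l by (simp add: L_def)
  have T0: "0 \<le> T" using l by (simp add: T_def)
  have "ennreal \<bar>riesz \<alpha> f x\<bar> \<le> (\<integral>\<^sup>+ y. ennreal \<bar>f y\<bar> * K y \<partial>lborel)"
    unfolding K_def by (rule riesz_le)
  also have "\<dots> \<le> (\<integral>\<^sup>+ y. (\<Sum>m. \<Sum>i. a m * indicator (ball (c m i) (r m i) \<inter> ?Q2) y) * K y \<partial>lborel)"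
    unfolding a_def by (intro nn_integral_mono mult_right_mono f_decomp[OF supp cov]) simp
  also have "\<dots> = (\<integral>\<^sup>+ y. (\<Sum>m. \<Sum>i. a m * (indicator (ball (c m i) (r m i) \<inter> ?Q2) y * K y)) \<partial>lborel)"
    by (simp add: ennreal_suminf_multc[symmetric] mult.assoc del: ennreal_suminf_multc)
  also have "\<dots> = (\<Sum>m. \<integral>\<^sup>+ y. (\<Sum>i. a m * (indicator (ball (c m i) (r m i) \<inter> ?Q2) y * K y)) \<partial>lborel)"
    by (rule nn_integral_suminf) (unfold K_def, measurable)
  also have "\<dots> = (\<Sum>m. \<Sum>i. \<integral>\<^sup>+ y. a m * (indicator (ball (c m i) (r m i) \<inter> ?Q2) y * K y) \<partial>lborel)"
    by (intro suminf_cong nn_integral_suminf) (unfold K_def, measurable)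
  also have "\<dots> = (\<Sum>m. \<Sum>i. a m * \<integral>\<^sup>+ y. indicator (ball (c m i) (r m i) \<inter> ?Q2) y * K y \<partial>lborel)"
    by (intro suminf_cong nn_integral_cmult) (unfold K_def, measurable)
  also have "\<dots> \<le> (\<Sum>m. \<Sum>i. a m * (\<Sum>p. ennreal (aw \<alpha> ?n (r m i) T p) *
      indicator (ZZ L (c m i) (r m i) p) (idx L (KLk L (r m i) p) x)))"
  proof (intro suminf_le mult_left_mono)
    fix m i
    have sub: "?Q2 \<subseteq> ball x0 (?n * l)" by (rule cube2_sub_ball[OF l])
    have xQ: "x \<in> ?Q2" using x cube_mono2[OF l] by blast
    show "(\<integral>\<^sup>+ y. indicator (ball (c m i) (r m i) \<inter> ?Q2) y * K y \<partial>lborel) \<le>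
      (\<Sum>p. ennreal (aw \<alpha> ?n (r m i) T p) * indicator (ZZ L (c m i) (r m i) p) (idx L (KLk L (r m i) p) x))"
      unfolding K_def ZZ_def KLk_def
    proof (rule ball_term[OF \<alpha> L0 r0 T0])
      show "4 * (T + r m i) \<le> L" using rR[of m i] by (simp add: T_def L_def algebra_simps)
      show "ball (c m i) (r m i) \<inter> ?Q2 \<subseteq> ball (c m i) (r m i)" by blast
      show "ball (c m i) (r m i) \<inter> ?Q2 \<in> sets borel" by measurable
      fix y assume "y \<in> ball (c m i) (r m i) \<inter> ?Q2"
      then have "y \<in> ball x0 (?n * l)" using sub by blast
      then have "dist x0 y < ?n * l" by simp
      moreover have "x \<in> ball x0 (?n * l)" using sub xQ by blast
      then have "dist x0 x < ?n * l" by simp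
      ultimately show "dist x y \<le> T" using dist_triangle[of x y x0] by (simp add: T_def dist_commute)
    qed
  qed auto
  also have "\<dots> = (\<Sum>m. \<Sum>i. \<Sum>p. a m * ennreal (aw \<alpha> ?n (r m i) T p) *
      indicator (ZZ L (c m i) (r m i) p) (idx L (KLk L (r m i) p) x))"
    by (simp add: ennreal_suminf_cmult[symmetric] mult.assoc del: ennreal_suminf_cmult)
  finally show ?thesis by (simp add: a_def L_def T_def)
qed


lemma hb_flat:
  fixes F :: "nat \<Rightarrow> nat \<Rightarrow> nat \<Rightarrow> ennreal"
  shows "(\<Sum>m. \<Sum>i. \<Sum>p. F m i p) = (\<Sum>j. F (fst (prod_decode j)) (fst (prod_decode (snd (prod_decode j)))) (snd (prod_decode (snd (prod_decode j)))))"
  by (rule suminf_3dimen[symmetric])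

lemma core:
  fixes x0 :: "'a::euclidean_space" and f :: "'a \<Rightarrow> real"
  assumes \<alpha>: "0 < \<alpha>" "\<alpha> < \<beta>" "\<beta> \<le> real DIM('a)" and l: "0 < l" and \<eta>: "0 < \<eta>"
    and supp: "closure {x. f x \<noteq> 0} \<subseteq> cube x0 (2 * l)"
  shows "choquet \<beta> (cube x0 l) (\<lambda>x. \<bar>riesz \<alpha> f x\<bar>) \<le>
    ennreal (2 * real DIM('a) powr \<beta> * (2 ^ DIM('a) * Cc \<alpha> \<beta> (real DIM('a)) * (3 * real DIM('a)) powr \<alpha>) * l powr \<alpha>)
    * (2 * choquet \<beta> (cube x0 (2 * l)) (\<lambda>x. \<bar>f x\<bar>) + ennreal \<eta>)"
proof -
  let ?n = "real DIM('a)"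
  let ?Q2 = "cube x0 (2 * l)"
  have \<beta>0: "0 < \<beta>" using \<alpha> by simp
  have \<alpha>n: "\<alpha> < ?n" using \<alpha> by simp
  have om: "0 < omega \<beta>" by (rule omega_pos[OF \<beta>0])
  define C1 where "C1 = 2 ^ DIM('a) * Cc \<alpha> \<beta> ?n * (3 * ?n) powr \<alpha>"
  have C10: "0 < C1" unfolding C1_def using Cc_pos[OF \<alpha>(1), of \<beta> ?n] by simp
  define R0 where "R0 = ?n * l"
  have R0: "0 < R0" using l by (simp add: R0_def)
  define L where "L = 12 * ?n * l"
  define T where "T = 2 * ?n * l"
  have L0: "0 < L" using l by (simp add: L_def)
  have T0: "0 \<le> T" using l by (simp add: T_def)
  define tm where "tm m = real_of_int (int_decode m)" for m
  define Ek where "Ek m = {x\<in>?Q2. \<bar>f x\<bar> > 2 powr tm m}" for m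
  define \<delta> where "\<delta> m = \<eta> / 2 ^ Suc m / 2 powr tm m" for m
  have \<delta>0: "0 < \<delta> m" for m using \<eta> by (simp add: \<delta>_def)
  have Esub: "Ek m \<subseteq> ball x0 R0" for m
    using cube2_sub_ball[OF l, of x0] unfolding R0_def Ek_def by blast
  define S where "S m = {cr. (\<forall>i. 0 \<le> snd cr i) \<and> (\<forall>i. snd cr i \<le> R0) \<and> Ek m \<subseteq> (\<Union>i. ball (fst cr i) (snd cr i)) \<and>
      (\<Sum>i. ennreal (omega \<beta> * snd cr i powr \<beta>)) < hcontent \<beta> (Ek m) + ennreal (\<delta> m)}" for m
  have "S m \<noteq> {}" for m
  proof -
    obtain c r where "\<And>i. 0 \<le> r i" "\<And>i. r i \<le> R0" "Ek m \<subseteq> (\<Union>i. ball (c i) (r i))"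
      "(\<Sum>i. ennreal (omega \<beta> * r i powr \<beta>)) < hcontent \<beta> (Ek m) + ennreal (\<delta> m)"
      by (rule cover_cap[OF \<beta>0 Esub R0 \<delta>0]) blast
    then have "(c, r) \<in> S m" by (simp add: S_def)
    then show ?thesis by blast
  qed
  define CR where "CR m = (SOME cr. cr \<in> S m)" for m
  have CRS: "CR m \<in> S m" for m unfolding CR_def using \<open>S m \<noteq> {}\<close> by (simp add: some_in_eq)
  define c where "c m i = fst (CR m) i" for m i
  define r where "r m i = snd (CR m) i" for m i
  have r0: "0 \<le> r m i" for m i using CRS[of m] by (simp add: S_def r_def)
  have rR: "r m i \<le> ?n * l" for m i using CRS[of m] by (simp add: S_def r_def R0_def)
  have cov: "{x\<in>?Q2. \<bar>f x\<bar> > 2 powr real_of_int (int_decode m)} \<subseteq> (\<Union>i. ball (c m i) (r m i))" for m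
    using CRS[of m] by (simp add: S_def r_def c_def Ek_def tm_def)
  have csum: "(\<Sum>i. ennreal (omega \<beta> * r m i powr \<beta>)) < hcontent \<beta> (Ek m) + ennreal (\<delta> m)" for m
    using CRS[of m] by (simp add: S_def r_def)
  define dm where "dm j = fst (prod_decode j)" for j
  define di where "di j = fst (prod_decode (snd (prod_decode j)))" for j
  define dp where "dp j = snd (prod_decode (snd (prod_decode j)))" for j
  define bb where "bb m i p = ennreal (2 * 2 powr tm m) * ennreal (aw \<alpha> ?n (r m i) T p)" for m i p
  define B where "B j = bb (dm j) (di j) (dp j)" for j
  define kk where "kk j = KLk L (r (dm j) (di j)) (dp j)" for j
  define Z where "Z j = ZZ L (c (dm j) (di j)) (r (dm j) (di j)) (dp j)" for j
  have hb: "ennreal \<bar>riesz \<alpha> f x\<bar> \<le> (\<Sum>j. B j * indicator (Z j) (idx L (kk j) x))" if x: "x \<in> cube x0 l" for x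
  proof -
    have "ennreal \<bar>riesz \<alpha> f x\<bar> \<le> (\<Sum>m. \<Sum>i. \<Sum>p. bb m i p *
      indicator (ZZ L (c m i) (r m i) p) (idx L (KLk L (r m i) p) x))"
      unfolding bb_def L_def T_def tm_def by (rule riesz_pointwise[OF \<alpha>(1) \<alpha>n l supp cov r0 rR x])
    also have "\<dots> = (\<Sum>j. B j * indicator (Z j) (idx L (kk j) x))"
      unfolding B_def Z_def kk_def dm_def di_def dp_def by (rule hb_flat)
    finally show ?thesis .
  qed
  have "choquet \<beta> (cube x0 l) (\<lambda>x. \<bar>riesz \<alpha> f x\<bar>) \<le> ennreal (omega \<beta> * ?n powr \<beta>) *
           (\<Sum>j. B j * of_nat (card (Z j)) * ennreal (sk L (kk j) powr \<beta>))"
  proof (rule KL[OF L0 \<beta>0])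
    show "finite (Z j)" for j by (simp add: Z_def ZZ_def Zb_finite)
    show "Z j \<subseteq> PiE Basis (\<lambda>_. UNIV)" for j by (simp add: Z_def ZZ_def Zb_sub)
  qed (rule hb)
  also have "(\<Sum>j. B j * of_nat (card (Z j)) * ennreal (sk L (kk j) powr \<beta>))
      = (\<Sum>m. \<Sum>i. \<Sum>p. bb m i p * of_nat (card (ZZ L (c m i) (r m i) p)) * ennreal (sk L (KLk L (r m i) p) powr \<beta>))"
    unfolding B_def Z_def kk_def dm_def di_def dp_def by (rule hb_flat[symmetric])
  also have "\<dots> \<le> (\<Sum>m. \<Sum>i. ennreal (2 * 2 powr tm m) * (ennreal (C1 * l powr \<alpha>) * ennreal (r m i powr \<beta>)))"
  proof (intro suminf_le)
    fix m i
    have "(\<Sum>p. bb m i p * of_nat (card (ZZ L (c m i) (r m i) p)) * ennreal (sk L (KLk L (r m i) p) powr \<beta>))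
      = ennreal (2 * 2 powr tm m) * (\<Sum>p. ennreal (aw \<alpha> ?n (r m i) T p) * of_nat (card (ZZ L (c m i) (r m i) p)) * ennreal (sk L (KLk L (r m i) p) powr \<beta>))"
      by (simp add: bb_def ennreal_suminf_cmult[symmetric] mult.assoc del: ennreal_suminf_cmult)
    also have "\<dots> \<le> ennreal (2 * 2 powr tm m) * ennreal (2 ^ DIM('a) * Cc \<alpha> \<beta> ?n * r m i powr \<beta> * (T + r m i) powr \<alpha>)"
    proof (intro mult_left_mono)
      show "(\<Sum>p. ennreal (aw \<alpha> ?n (r m i) T p) * of_nat (card (ZZ L (c m i) (r m i) p)) * ennreal (sk L (KLk L (r m i) p) powr \<beta>))
          \<le> ennreal (2 ^ DIM('a) * Cc \<alpha> \<beta> ?n * r m i powr \<beta> * (T + r m i) powr \<alpha>)"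
        unfolding ZZ_def KLk_def
        by (rule ball_cost[OF \<alpha>(1) \<beta>0 \<alpha>(3) L0 r0 T0]) (use rR[of m i] in \<open>simp add: L_def T_def algebra_simps\<close>)
    qed simp
    also have "\<dots> \<le> ennreal (2 * 2 powr tm m) * (ennreal (C1 * l powr \<alpha>) * ennreal (r m i powr \<beta>))"
    proof (intro mult_left_mono)
      have "(T + r m i) powr \<alpha> \<le> (3 * ?n * l) powr \<alpha>"
        using rR[of m i] r0[of m i] T0 \<alpha>(1) by (intro powr_mono2) (auto simp: T_def mult.commute)
      also have "\<dots> = (3 * ?n) powr \<alpha> * l powr \<alpha>" by (simp add: powr_mult)
      finally have Tle: "(T + r m i) powr \<alpha> \<le> (3 * ?n) powr \<alpha> * l powr \<alpha>" .
      have "2 ^ DIM('a) * Cc \<alpha> \<beta> ?n * r m i powr \<beta> * (T + r m i) powr \<alpha> \<le> C1 * l powr \<alpha> * r m i powr \<beta>"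
      proof -
        have K0: "0 \<le> 2 ^ DIM('a) * Cc \<alpha> \<beta> ?n * r m i powr \<beta>"
          using Cc_pos[OF \<alpha>(1), of \<beta> ?n] by simp
        have "2 ^ DIM('a) * Cc \<alpha> \<beta> ?n * r m i powr \<beta> * (T + r m i) powr \<alpha>
            \<le> 2 ^ DIM('a) * Cc \<alpha> \<beta> ?n * r m i powr \<beta> * ((3 * ?n) powr \<alpha> * l powr \<alpha>)"
          by (rule mult_left_mono[OF Tle K0])
        then show ?thesis unfolding C1_def by (simp add: mult_ac)
      qed
      then show "ennreal (2 ^ DIM('a) * Cc \<alpha> \<beta> ?n * r m i powr \<beta> * (T + r m i) powr \<alpha>) \<le> ennreal (C1 * l powr \<alpha>) * ennreal (r m i powr \<beta>)"
        using C10 by (simp add: ennreal_mult'[symmetric] ennreal_leI)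
    qed simp
    finally show "(\<Sum>p. bb m i p * of_nat (card (ZZ L (c m i) (r m i) p)) * ennreal (sk L (KLk L (r m i) p) powr \<beta>))
        \<le> ennreal (2 * 2 powr tm m) * (ennreal (C1 * l powr \<alpha>) * ennreal (r m i powr \<beta>))" .
  qed auto
  also have "\<dots> = ennreal (C1 * l powr \<alpha>) * (\<Sum>m. ennreal (2 * 2 powr tm m) * (\<Sum>i. ennreal (r m i powr \<beta>)))"
    by (simp add: ennreal_suminf_cmult[symmetric] mult.left_commute del: ennreal_suminf_cmult)
  also have "(\<Sum>m. ennreal (2 * 2 powr tm m) * (\<Sum>i. ennreal (r m i powr \<beta>)))
      \<le> (\<Sum>m. ennreal (2 * 2 powr tm m) * (ennreal (1 / omega \<beta>) * (hcontent \<beta> (Ek m) + ennreal (\<delta> m))))"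
  proof (intro suminf_le mult_left_mono)
    fix m
    have "(\<Sum>i. ennreal (r m i powr \<beta>)) = (\<Sum>i. ennreal (1 / omega \<beta>) * ennreal (omega \<beta> * r m i powr \<beta>))"
      using om by (intro suminf_cong) (simp add: ennreal_mult'[symmetric])
    also have "\<dots> = ennreal (1 / omega \<beta>) * (\<Sum>i. ennreal (omega \<beta> * r m i powr \<beta>))"
      by (rule ennreal_suminf_cmult)
    also have "\<dots> \<le> ennreal (1 / omega \<beta>) * (hcontent \<beta> (Ek m) + ennreal (\<delta> m))"
      using csum[of m] by (intro mult_left_mono) auto
    finally show "(\<Sum>i. ennreal (r m i powr \<beta>)) \<le> ennreal (1 / omega \<beta>) * (hcontent \<beta> (Ek m) + ennreal (\<delta> m))" .
  qed auto
  also have "(\<Sum>m. ennreal (2 * 2 powr tm m) * (ennreal (1 / omega \<beta>) * (hcontent \<beta> (Ek m) + ennreal (\<delta> m))))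
      = ennreal (2 / omega \<beta>) * ((\<Sum>m. ennreal (2 powr tm m) * hcontent \<beta> (Ek m)) + (\<Sum>m. ennreal (2 powr tm m * \<delta> m)))"
  proof -
    have "(\<Sum>m. ennreal (2 * 2 powr tm m) * (ennreal (1 / omega \<beta>) * (hcontent \<beta> (Ek m) + ennreal (\<delta> m))))
      = (\<Sum>m. ennreal (2 / omega \<beta>) * (ennreal (2 powr tm m) * hcontent \<beta> (Ek m) + ennreal (2 powr tm m * \<delta> m)))"
    proof (intro suminf_cong)
      fix m
      have e1: "ennreal (2 * 2 powr tm m) * ennreal (1 / omega \<beta>) = ennreal (2 / omega \<beta>) * ennreal (2 powr tm m)"
        using om by (simp add: ennreal_mult'[symmetric])
      have e2: "ennreal (2 powr tm m) * ennreal (\<delta> m) = ennreal (2 powr tm m * \<delta> m)"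
        by (simp add: ennreal_mult'[symmetric])
      show "ennreal (2 * 2 powr tm m) * (ennreal (1 / omega \<beta>) * (hcontent \<beta> (Ek m) + ennreal (\<delta> m)))
        = ennreal (2 / omega \<beta>) * (ennreal (2 powr tm m) * hcontent \<beta> (Ek m) + ennreal (2 powr tm m * \<delta> m))"
      proof -
        have "ennreal (2 * 2 powr tm m) * (ennreal (1 / omega \<beta>) * (hcontent \<beta> (Ek m) + ennreal (\<delta> m)))
          = (ennreal (2 * 2 powr tm m) * ennreal (1 / omega \<beta>)) * (hcontent \<beta> (Ek m) + ennreal (\<delta> m))"
          by (rule mult.assoc[symmetric])
        also have "\<dots> = ennreal (2 / omega \<beta>) * (ennreal (2 powr tm m) * (hcontent \<beta> (Ek m) + ennreal (\<delta> m)))"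
          unfolding e1 by (rule mult.assoc)
        also have "ennreal (2 powr tm m) * (hcontent \<beta> (Ek m) + ennreal (\<delta> m))
            = ennreal (2 powr tm m) * hcontent \<beta> (Ek m) + ennreal (2 powr tm m * \<delta> m)"
          unfolding e2[symmetric] by (rule distrib_left)
        finally show ?thesis .
      qed
    qed
    also have "\<dots> = ennreal (2 / omega \<beta>) * (\<Sum>m. ennreal (2 powr tm m) * hcontent \<beta> (Ek m) + ennreal (2 powr tm m * \<delta> m))"
      by (rule ennreal_suminf_cmult)
    also have "(\<Sum>m. ennreal (2 powr tm m) * hcontent \<beta> (Ek m) + ennreal (2 powr tm m * \<delta> m))
        = (\<Sum>m. ennreal (2 powr tm m) * hcontent \<beta> (Ek m)) + (\<Sum>m. ennreal (2 powr tm m * \<delta> m))"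
      by (rule suminf_add[symmetric]) auto
    finally show ?thesis .
  qed
  also have "(\<Sum>m. ennreal (2 powr tm m * \<delta> m)) = ennreal \<eta>"
  proof -
    have "(\<Sum>m. ennreal (2 powr tm m * \<delta> m)) = (\<Sum>m. ennreal (\<eta> * (1/2) ^ Suc m))"
      by (intro suminf_cong) (simp add: \<delta>_def field_simps)
    also have "\<dots> = ennreal \<eta>"
      using sums_mult[OF power_half_series, of \<eta>] \<eta> by (intro suminf_ennreal_eq) auto
    finally show ?thesis .
  qed
  also have "(\<Sum>m. ennreal (2 powr tm m) * hcontent \<beta> (Ek m)) \<le> 2 * choquet \<beta> ?Q2 (\<lambda>x. \<bar>f x\<bar>)"
  proof -
    have "(\<Sum>m. ennreal (2 powr tm m) * hcontent \<beta> (Ek m))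
      = (\<Sum>m. ennreal (2 powr real_of_int (int_decode m)) * (\<lambda>s. hcontent \<beta> {x\<in>?Q2. \<bar>f x\<bar> > s}) (2 powr real_of_int (int_decode m)))"
      by (simp add: tm_def Ek_def)
    also have "\<dots> \<le> 2 * (\<integral>\<^sup>+ s. (\<lambda>s. hcontent \<beta> {x\<in>?Q2. \<bar>f x\<bar> > s}) s * indicator {0..} s \<partial>lborel)"
      by (rule level_sum_bound) (auto intro!: hcontent_mono)
    also have "\<dots> = 2 * choquet \<beta> ?Q2 (\<lambda>x. \<bar>f x\<bar>)" by (simp add: choquet_def)
    finally show ?thesis .
  qed
  finally have "choquet \<beta> (cube x0 l) (\<lambda>x. \<bar>riesz \<alpha> f x\<bar>) \<le> ennreal (omega \<beta> * ?n powr \<beta>) *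
      (ennreal (C1 * l powr \<alpha>) * (ennreal (2 / omega \<beta>) * (2 * choquet \<beta> ?Q2 (\<lambda>x. \<bar>f x\<bar>) + ennreal \<eta>)))"
    by (simp add: mult_left_mono add_right_mono)
  also have "\<dots> = ennreal (2 * ?n powr \<beta> * C1 * l powr \<alpha>) * (2 * choquet \<beta> ?Q2 (\<lambda>x. \<bar>f x\<bar>) + ennreal \<eta>)"
  proof -
    define a where "a = omega \<beta> * ?n powr \<beta>"
    define b where "b = C1 * l powr \<alpha>"
    define c where "c = 2 / omega \<beta>"
    define X where "X = 2 * choquet \<beta> ?Q2 (\<lambda>x. \<bar>f x\<bar>) + ennreal \<eta>"
    have a0: "0 \<le> a" using om by (simp add: a_def)
    have b0: "0 \<le> b" using C10 by (simp add: b_def)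
    have c0: "0 \<le> c" using om by (simp add: c_def)
    have "ennreal a * (ennreal b * (ennreal c * X)) = ennreal (a * b * c) * X"
      using a0 b0 c0 by (simp add: ennreal_mult mult.assoc)
    moreover have "a * b * c = 2 * ?n powr \<beta> * C1 * l powr \<alpha>"
      using om by (simp add: a_def b_def c_def field_simps)
    ultimately show ?thesis by (simp add: a_def b_def c_def X_def)
  qed
  finally show ?thesis by (simp only: C1_def)
qed


theorem lemma4p3:
  fixes \<alpha> \<beta> :: real
  assumes "0 < \<alpha>" and "\<alpha> < \<beta>" and "\<beta> \<le> real DIM('a::euclidean_space)"
  shows "\<exists>C>0. \<forall>(x0::'a) (l::real) (f::'a \<Rightarrow> real).
           0 < l \<longrightarrow> f \<in> borel_measurable lebesgue \<longrightarrow>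
           closure {x. f x \<noteq> 0} \<subseteq> cube x0 (2 * l) \<longrightarrow>
           choquet \<beta> (cube x0 l) (\<lambda>x. \<bar>riesz \<alpha> f x\<bar>)
             \<le> ennreal (C * l powr \<alpha>) * choquet \<beta> (cube x0 (2 * l)) (\<lambda>x. \<bar>f x\<bar>)"
proof -
  let ?n = "real DIM('a)"
  define C where "C = 4 * ?n powr \<beta> * (2 ^ DIM('a) * Cc \<alpha> \<beta> ?n * (3 * ?n) powr \<alpha>)"
  have C0: "0 < C" using Cc_pos[OF assms(1), of \<beta> ?n] by (simp add: C_def)
  show ?thesis
  proof (intro exI[of _ C] conjI allI impI)
    show "0 < C" by (rule C0)
    fix x0 :: 'a and l :: real and f :: "'a \<Rightarrow> real"
    assume l: "0 < l" and fm: "f \<in> borel_measurable lebesgue"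
      and supp: "closure {x. f x \<noteq> 0} \<subseteq> cube x0 (2 * l)"
    define J where "J = choquet \<beta> (cube x0 (2 * l)) (\<lambda>x. \<bar>f x\<bar>)"
    define A where "A = 2 * ?n powr \<beta> * (2 ^ DIM('a) * Cc \<alpha> \<beta> ?n * (3 * ?n) powr \<alpha>) * l powr \<alpha>"
    have A0: "0 < A" using Cc_pos[OF assms(1), of \<beta> ?n] l by (simp add: A_def)
    have CA: "C * l powr \<alpha> = 2 * A" by (simp add: C_def A_def)
    have core': "choquet \<beta> (cube x0 l) (\<lambda>x. \<bar>riesz \<alpha> f x\<bar>) \<le> ennreal A * (2 * J + ennreal \<eta>)"
      if "0 < \<eta>" for \<eta>
      unfolding A_def J_def by (rule core[OF assms l that supp])
    show "choquet \<beta> (cube x0 l) (\<lambda>x. \<bar>riesz \<alpha> f x\<bar>) \<le> ennreal (C * l powr \<alpha>) * choquet \<beta> (cube x0 (2 * l)) (\<lambda>x. \<bar>f x\<bar>)"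
    proof (rule ennreal_le_epsilon)
      fix e :: real assume e: "0 < e"
      have "choquet \<beta> (cube x0 l) (\<lambda>x. \<bar>riesz \<alpha> f x\<bar>) \<le> ennreal A * (2 * J + ennreal (e / A))"
        using core'[of "e / A"] e A0 by simp
      also have "\<dots> = ennreal A * 2 * J + ennreal A * ennreal (e / A)"
        by (simp add: distrib_left mult.assoc)
      also have "ennreal A * 2 = ennreal (C * l powr \<alpha>)"
        using A0 by (simp add: CA ennreal_mult mult.commute)
      also have "ennreal A * ennreal (e / A) = ennreal e"
        using A0 e by (simp add: ennreal_mult[symmetric])
      finally show "choquet \<beta> (cube x0 l) (\<lambda>x. \<bar>riesz \<alpha> f x\<bar>) \<le> ennreal (C * l powr \<alpha>) * choquet \<beta> (cube x0 (2 * l)) (\<lambda>x. \<bar>f x\<bar>) + ennreal e"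
        by (simp add: J_def)
    qed
  qed
qed


end
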